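(* Let $0\le p,q<1$, $\theta\in(0,1)$ irrational, and $N\ge2$ an integer. Let $\mathcal O(S^3_{pq\theta})$ be the universal complex unital $*$-algebra generated by $a,b$ subject to $ab=e^{2\pi i\theta}ba$, $ab^*=e^{-2\pi i\theta}b^*a$, $a^*a-paa^*=1-p$, $b^*b-qbb^*=1-q$, $(1-aa^* )(1-bb^* )=0$. Let $\mathcal O(\mathbb Z/N\mathbb Z)$ be the Hopf $*$-algebra generated by a group-like unitary $\tilde u$ with $\tilde u^N=1$, and equip $\mathcal O(S^3_{pq\theta})$ with the right $\mathcal O(\mathbb Z/N\mathbb Z)$-comodule algebra structure given by the $*$-algebra map $\Delta_P$ with $\Delta_P(a)=a\otimes\tilde u$, $\Delta_P(b)=b\otimes\tilde u$. Then $\mathcal O(S^3_{pq\theta})$ is a non-cleft $\mathcal O(\mathbb Z/N\mathbb Z)$-comodule algebra.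
   Context: A right $H$-comodule algebra $P$ (with coaction $\Delta_P$) is cleft if there exists a unital right $H$-colinear linear map $j:H\to P$ that is invertible with respect to the convolution product $(f*g)(h)=f(h_{(1)})g(h_{(2)})$. *)

theory Defs
  imports Complex_Main
begin

text \<open>Letters: a, a*, b, b*.  Elements of the free *-algebra are finitely supported
  coefficient functions on words (the words form a basis).\<close>

datatype gen = GA | GAs | GB | GBs

type_synonym fa = "gen list \<Rightarrow> complex"

definition fin :: "fa \<Rightarrow> bool" where
  "fin f \<longleftrightarrow> finite {w. f w \<noteq> 0}"

definition fa_zero :: fa where "fa_zero = (\<lambda>w. 0)"
definition fa_one :: fa where "fa_one = (\<lambda>w. if w = [] then 1 else 0)"
definition fa_gen :: "gen \<Rightarrow> fa" where "fa_gen x = (\<lambda>w. if w = [x] then 1 else 0)"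
definition fa_add :: "fa \<Rightarrow> fa \<Rightarrow> fa" where "fa_add f g = (\<lambda>w. f w + g w)"
definition fa_smult :: "complex \<Rightarrow> fa \<Rightarrow> fa" where "fa_smult c f = (\<lambda>w. c * f w)"
definition fa_diff :: "fa \<Rightarrow> fa \<Rightarrow> fa" where "fa_diff f g = (\<lambda>w. f w - g w)"

definition fa_mult :: "fa \<Rightarrow> fa \<Rightarrow> fa" where
  "fa_mult f g = (\<lambda>w. \<Sum>i\<le>length w. f (take i w) * g (drop i w))"

fun star_gen :: "gen \<Rightarrow> gen" where
  "star_gen GA = GAs" | "star_gen GAs = GA" | "star_gen GB = GBs" | "star_gen GBs = GB"

definition fa_star :: "fa \<Rightarrow> fa" where
  "fa_star f = (\<lambda>w. cnj (f (rev (map star_gen w))))"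

inductive_set star_ideal :: "fa set \<Rightarrow> fa set" for R where
  zero: "fa_zero \<in> star_ideal R"
| gen: "r \<in> R \<Longrightarrow> fin x \<Longrightarrow> fin y \<Longrightarrow> fa_mult (fa_mult x r) y \<in> star_ideal R"
| add: "f \<in> star_ideal R \<Longrightarrow> g \<in> star_ideal R \<Longrightarrow> fa_add f g \<in> star_ideal R"
| smult: "f \<in> star_ideal R \<Longrightarrow> fa_smult c f \<in> star_ideal R"
| star: "f \<in> star_ideal R \<Longrightarrow> fa_star f \<in> star_ideal R"

definition qeq :: "fa set \<Rightarrow> fa \<Rightarrow> fa \<Rightarrow> bool" where
  "qeq I f g \<longleftrightarrow> fa_diff f g \<in> I"

definition rels :: "real \<Rightarrow> real \<Rightarrow> real \<Rightarrow> fa set" where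
  "rels p q \<theta> =
    (let a = fa_gen GA; as = fa_gen GAs; b = fa_gen GB; bs = fa_gen GBs;
         z = cis (2 * pi * \<theta>) in
     { fa_diff (fa_mult a b) (fa_smult z (fa_mult b a)),
       fa_diff (fa_mult a bs) (fa_smult (cnj z) (fa_mult bs a)),
       fa_diff (fa_diff (fa_mult as a) (fa_smult (complex_of_real p) (fa_mult a as)))
               (fa_smult (complex_of_real (1 - p)) fa_one),
       fa_diff (fa_diff (fa_mult bs b) (fa_smult (complex_of_real q) (fa_mult b bs)))
               (fa_smult (complex_of_real (1 - q)) fa_one),
       fa_mult (fa_diff fa_one (fa_mult a as)) (fa_diff fa_one (fa_mult b bs)) })"

definition S3_ideal :: "real \<Rightarrow> real \<Rightarrow> real \<Rightarrow> fa set" where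
  "S3_ideal p q \<theta> = star_ideal (rels p q \<theta>)"

text \<open>O(Z/NZ) has basis u^0,...,u^(N-1); an element h is given by its coefficients
  h k (k < N).  Coproduct u^k \<mapsto> u^k \<otimes> u^k, counit u^k \<mapsto> 1.
  An element of H \<otimes> H is given by coefficients on u^i \<otimes> u^j.\<close>

definition H_coprod :: "(nat \<Rightarrow> complex) \<Rightarrow> nat \<Rightarrow> nat \<Rightarrow> complex" where
  "H_coprod h i j = (if i = j then h i else 0)"

definition H_counit :: "nat \<Rightarrow> (nat \<Rightarrow> complex) \<Rightarrow> complex" where
  "H_counit N h = (\<Sum>k<N. h k)"

fun deg_gen :: "gen \<Rightarrow> int" where
  "deg_gen GA = 1" | "deg_gen GAs = -1" | "deg_gen GB = 1" | "deg_gen GBs = -1"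

definition wdeg :: "gen list \<Rightarrow> int" where
  "wdeg w = sum_list (map deg_gen w)"

text \<open>The coaction: the *-algebra map with a \<mapsto> a \<otimes> u, b \<mapsto> b \<otimes> u
  (hence a* \<mapsto> a* \<otimes> u^(-1), b* \<mapsto> b* \<otimes> u^(-1)), i.e. a word w \<mapsto> w \<otimes> u^(deg w mod N).
  An element of P \<otimes> H is represented by its components k \<mapsto> (P-coefficient of u^k).\<close>
definition coact :: "nat \<Rightarrow> fa \<Rightarrow> nat \<Rightarrow> fa" where
  "coact N f k = (\<lambda>w. if wdeg w mod int N = int k then f w else 0)"

text \<open>Linear maps H \<rightarrow> P are given by their values on the basis u^k (representatives in F).\<close>
definition lin_ext :: "nat \<Rightarrow> (nat \<Rightarrow> fa) \<Rightarrow> (nat \<Rightarrow> complex) \<Rightarrow> fa" where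
  "lin_ext N J h = (\<lambda>w. \<Sum>k<N. h k * J k w)"

text \<open>Convolution (F*G)(h) = F(h_(1)) G(h_(2)).\<close>
definition conv :: "nat \<Rightarrow> (nat \<Rightarrow> fa) \<Rightarrow> (nat \<Rightarrow> fa) \<Rightarrow> (nat \<Rightarrow> complex) \<Rightarrow> fa" where
  "conv N F G h = (\<lambda>w. \<Sum>i<N. \<Sum>j<N. H_coprod h i j * fa_mult (F i) (G j) w)"

text \<open>Right H-colinearity: coact \<circ> j = (j \<otimes> id) \<circ> \<Delta>_H, compared componentwise in P \<otimes> H.\<close>
definition colinear :: "nat \<Rightarrow> fa set \<Rightarrow> (nat \<Rightarrow> fa) \<Rightarrow> bool" where
  "colinear N I J \<longleftrightarrow>
     (\<forall>h. \<forall>k<N. qeq I (coact N (lin_ext N J h) k) (\<lambda>w. \<Sum>i<N. H_coprod h i k * J i w))"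

definition cleft :: "nat \<Rightarrow> fa set \<Rightarrow> bool" where
  "cleft N I \<longleftrightarrow>
    (\<exists>J. (\<forall>k<N. fin (J k)) \<and> qeq I (J 0) fa_one \<and> colinear N I J \<and>
       (\<exists>G. (\<forall>k<N. fin (G k)) \<and>
          (\<forall>h. qeq I (conv N J G h) (fa_smult (H_counit N h) fa_one) \<and>
               qeq I (conv N G J h) (fa_smult (H_counit N h) fa_one))))"

text \<open>The coaction on F descends to F/I (i.e. the comodule algebra structure on the quotient
  is well defined): I is a graded subspace.\<close>
definition coaction_descends :: "nat \<Rightarrow> fa set \<Rightarrow> bool" where
  "coaction_descends N I \<longleftrightarrow> (\<forall>f\<in>I. \<forall>k<N. coact N f k \<in> I)"

end

theory Submission
  imports Defs "HOL-Library.Product_Lexorder"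
begin

definition supp :: "fa \<Rightarrow> gen list set" where "supp f = {w. f w \<noteq> 0}"

lemma fin_supp: "fin f \<longleftrightarrow> finite (supp f)" by (simp add: fin_def supp_def)

lemma fin_zero[simp]: "fin fa_zero" by (simp add: fin_def fa_zero_def)
lemma fin_one[simp]: "fin fa_one"
proof -
  have "{w. fa_one w \<noteq> 0} \<subseteq> {[]}" by (auto simp: fa_one_def split: if_splits)
  thus ?thesis unfolding fin_def using finite_subset by blast
qed
lemma fin_gen[simp]: "fin (fa_gen g)"
proof -
  have "{w. fa_gen g w \<noteq> 0} \<subseteq> {[g]}" by (auto simp: fa_gen_def split: if_splits)
  thus ?thesis unfolding fin_def using finite_subset by blast
qed
lemma fin_add[simp]: "fin f \<Longrightarrow> fin g \<Longrightarrow> fin (fa_add f g)"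
proof -
  assume "fin f" "fin g"
  have "{w. fa_add f g w \<noteq> 0} \<subseteq> {w. f w \<noteq> 0} \<union> {w. g w \<noteq> 0}" by (auto simp: fa_add_def)
  thus ?thesis using \<open>fin f\<close> \<open>fin g\<close> unfolding fin_def using finite_subset by blast
qed
lemma fin_diff[simp]: "fin f \<Longrightarrow> fin g \<Longrightarrow> fin (fa_diff f g)"
proof -
  assume "fin f" "fin g"
  have "{w. fa_diff f g w \<noteq> 0} \<subseteq> {w. f w \<noteq> 0} \<union> {w. g w \<noteq> 0}" by (auto simp: fa_diff_def)
  thus ?thesis using \<open>fin f\<close> \<open>fin g\<close> unfolding fin_def using finite_subset by blast
qed
lemma fin_smult[simp]: "fin f \<Longrightarrow> fin (fa_smult c f)"
proof -
  assume "fin f"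
  have "{w. fa_smult c f w \<noteq> 0} \<subseteq> {w. f w \<noteq> 0}" by (auto simp: fa_smult_def)
  thus ?thesis using \<open>fin f\<close> unfolding fin_def using finite_subset by blast
qed

lemma supp_mult: "supp (fa_mult f g) \<subseteq> (\<lambda>(u,v). u @ v) ` (supp f \<times> supp g)"
proof
  fix w assume "w \<in> supp (fa_mult f g)"
  then obtain i where "i \<le> length w" "f (take i w) * g (drop i w) \<noteq> 0"
    unfolding supp_def fa_mult_def by (auto elim: sum.not_neutral_contains_not_neutral)
  thus "w \<in> (\<lambda>(u,v). u @ v) ` (supp f \<times> supp g)"
    unfolding supp_def by (intro image_eqI[of _ _ "(take i w, drop i w)"]) auto
qed

lemma fin_mult[simp]: "fin f \<Longrightarrow> fin g \<Longrightarrow> fin (fa_mult f g)"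
  unfolding fin_supp using supp_mult finite_subset by blast

lemma star_gen_inv[simp]: "star_gen (star_gen g) = g" by (cases g) auto

lemma rms_inv[simp]: "rev (map star_gen (rev (map star_gen w))) = w"
  by (induction w) auto

lemma fin_star[simp]: "fin f \<Longrightarrow> fin (fa_star f)"
proof -
  assume "fin f"
  have "{w. fa_star f w \<noteq> 0} \<subseteq> (\<lambda>w. rev (map star_gen w)) ` {w. f w \<noteq> 0}"
  proof
    fix w assume "w \<in> {w. fa_star f w \<noteq> 0}"
    thus "w \<in> (\<lambda>w. rev (map star_gen w)) ` {w. f w \<noteq> 0}"
      unfolding fa_star_def by (intro image_eqI[of _ _ "rev (map star_gen w)"]) auto
  qed
  thus ?thesis using \<open>fin f\<close> unfolding fin_def using finite_subset by blast
qed

lemma star_star[simp]: "fa_star (fa_star f) = f"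
  by (simp add: fa_star_def)

lemma star_add[simp]: "fa_star (fa_add f g) = fa_add (fa_star f) (fa_star g)"
  by (simp add: fa_star_def fa_add_def)
lemma star_diff[simp]: "fa_star (fa_diff f g) = fa_diff (fa_star f) (fa_star g)"
  by (simp add: fa_star_def fa_diff_def)
lemma star_smult[simp]: "fa_star (fa_smult c f) = fa_smult (cnj c) (fa_star f)"
  by (simp add: fa_star_def fa_smult_def)
lemma star_zero[simp]: "fa_star fa_zero = fa_zero"
  by (simp add: fa_star_def fa_zero_def)
lemma star_one[simp]: "fa_star fa_one = fa_one"
  by (simp add: fa_star_def fa_one_def fun_eq_iff)
lemma star_gen_eq: "star_gen x = g \<longleftrightarrow> x = star_gen g" by (cases x; cases g) auto

lemma ms_single: "(map star_gen w = [g]) = (w = [star_gen g])"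
  by (cases w) (simp_all add: star_gen_eq conj_commute)

lemma rms_single: "(rev (map star_gen w) = [g]) = (w = [star_gen g])"
  by (cases w) (simp_all add: star_gen_eq conj_commute)

lemma star_fgen[simp]: "fa_star (fa_gen g) = fa_gen (star_gen g)"
  by (simp add: fa_star_def fa_gen_def fun_eq_iff rms_single ms_single)

lemma star_mult[simp]: "fa_star (fa_mult f g) = fa_mult (fa_star g) (fa_star f)"
proof (rule ext)
  fix w :: "gen list"
  let ?s = "\<lambda>w. rev (map star_gen w)"
  let ?n = "length w"
  have "fa_star (fa_mult f g) w = (\<Sum>i\<le>?n. cnj (f (take i (?s w))) * cnj (g (drop i (?s w))))"
    by (simp add: fa_star_def fa_mult_def)
  also have "\<dots> = (\<Sum>i\<le>?n. cnj (f (take (?n - i) (?s w))) * cnj (g (drop (?n - i) (?s w))))"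
    by (rule sum.reindex_bij_witness[where i="\<lambda>i. ?n - i" and j="\<lambda>i. ?n - i"]) auto
  also have "\<dots> = (\<Sum>i\<le>?n. cnj (g (?s (take i w))) * cnj (f (?s (drop i w))))"
    by (intro sum.cong refl) (simp add: take_rev drop_rev take_map drop_map)
  also have "\<dots> = fa_mult (fa_star g) (fa_star f) w"
    by (simp add: fa_star_def fa_mult_def)
  finally show "fa_star (fa_mult f g) w = fa_mult (fa_star g) (fa_star f) w" .
qed

lemma sum_split_words:
  fixes F :: "gen list \<Rightarrow> gen list \<Rightarrow> 'a::comm_monoid_add"
  assumes A: "finite A" and B: "finite B" and S: "finite S"
    and sub: "(\<lambda>(u,v). u @ v) ` (A \<times> B) \<subseteq> S"
    and z: "\<And>u v. u \<notin> A \<or> v \<notin> B \<Longrightarrow> F u v = 0"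
  shows "(\<Sum>w\<in>S. \<Sum>i\<le>length w. F (take i w) (drop i w)) = (\<Sum>u\<in>A. \<Sum>v\<in>B. F u v)"
proof -
  have "(\<Sum>w\<in>S. \<Sum>i\<le>length w. F (take i w) (drop i w)) =
        (\<Sum>(w,i)\<in>Sigma S (\<lambda>w. {..length w}). F (take i w) (drop i w))"
    using S by (simp add: sum.Sigma)
  also have "\<dots> = (\<Sum>(w,i)\<in>{(w,i)\<in>Sigma S (\<lambda>w. {..length w}). take i w \<in> A \<and> drop i w \<in> B}.
                      F (take i w) (drop i w))"
    using S z by (intro sum.mono_neutral_right) auto
  also have "\<dots> = (\<Sum>(u,v)\<in>A \<times> B. F u v)"
  proof (rule sum.reindex_bij_witness[where j="\<lambda>(w,i). (take i w, drop i w)"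
        and i="\<lambda>(u,v). (u @ v, length u)"])
    fix a assume "a \<in> {(w,i)\<in>Sigma S (\<lambda>w. {..length w}). take i w \<in> A \<and> drop i w \<in> B}"
    thus "(case case a of (w, i) \<Rightarrow> (take i w, drop i w) of (u, v) \<Rightarrow> (u @ v, length u)) = a"
      by (auto simp: min_def)
  next
    fix b assume "b \<in> A \<times> B"
    thus "(case b of (u, v) \<Rightarrow> (u @ v, length u)) \<in> {(w,i)\<in>Sigma S (\<lambda>w. {..length w}). take i w \<in> A \<and> drop i w \<in> B}"
      using sub by auto
  qed auto
  also have "\<dots> = (\<Sum>u\<in>A. \<Sum>v\<in>B. F u v)" by (simp add: sum.cartesian_product)
  finally show ?thesis .
qed

locale linrep =
  fixes G :: "gen \<Rightarrow> ('x \<Rightarrow> complex) \<Rightarrow> ('x \<Rightarrow> complex)"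
  assumes G_lin: "G g (\<lambda>x. c * v x + u x) = (\<lambda>x. c * G g v x + G g u x)"
begin

lemma G_zero: "G g (\<lambda>x. 0) = (\<lambda>x. 0)"
proof -
  have "G g (\<lambda>x. 1 * (0::complex) + 0) = (\<lambda>x. 1 * G g (\<lambda>x. 0) x + G g (\<lambda>x. 0) x)"
    by (rule G_lin)
  hence "G g (\<lambda>x. 0) = (\<lambda>x. G g (\<lambda>x. 0) x + G g (\<lambda>x. 0) x)" by simp
  hence "\<And>x. G g (\<lambda>x. 0) x = G g (\<lambda>x. 0) x + G g (\<lambda>x. 0) x" by metis
  thus ?thesis by (auto simp: fun_eq_iff)
qed

fun wop :: "gen list \<Rightarrow> ('x \<Rightarrow> complex) \<Rightarrow> ('x \<Rightarrow> complex)" where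
  "wop [] v = v"
| "wop (g # w) v = G g (wop w v)"

lemma wop_lin: "wop w (\<lambda>x. c * v x + u x) = (\<lambda>x. c * wop w v x + wop w u x)"
  by (induction w) (simp_all add: G_lin)

lemma wop_zero: "wop w (\<lambda>x. 0) = (\<lambda>x. 0)"
  by (induction w) (simp_all add: G_zero)

lemma wop_sum: "finite S \<Longrightarrow> wop w (\<lambda>x. \<Sum>i\<in>S. c i * v i x) = (\<lambda>x. \<Sum>i\<in>S. c i * wop w (v i) x)"
proof (induction S rule: finite_induct)
  case empty thus ?case by (simp add: wop_zero)
next
  case (insert a S)
  have "wop w (\<lambda>x. \<Sum>i\<in>insert a S. c i * v i x) = wop w (\<lambda>x. c a * v a x + (\<Sum>i\<in>S. c i * v i x))"
    using insert by simp
  also have "\<dots> = (\<lambda>x. c a * wop w (v a) x + wop w (\<lambda>x. \<Sum>i\<in>S. c i * v i x) x)"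
    by (rule wop_lin)
  finally show ?case using insert by simp
qed

lemma wop_append: "wop (u @ w) v = wop u (wop w v)"
  by (induction u) auto

definition rep :: "fa \<Rightarrow> ('x \<Rightarrow> complex) \<Rightarrow> ('x \<Rightarrow> complex)" where
  "rep f v = (\<lambda>x. \<Sum>w\<in>supp f. f w * wop w v x)"

lemma rep_superset:
  assumes "finite S" "supp f \<subseteq> S"
  shows "rep f v = (\<lambda>x. \<Sum>w\<in>S. f w * wop w v x)"
  unfolding rep_def using assms by (intro ext sum.mono_neutral_left) (auto simp: supp_def)

lemma rep_add: "fin f \<Longrightarrow> fin g \<Longrightarrow> rep (fa_add f g) v = (\<lambda>x. rep f v x + rep g v x)"
proof -
  assume f: "fin f" and g: "fin g"
  let ?S = "supp f \<union> supp g"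
  have fS: "finite ?S" using f g by (simp add: fin_supp)
  have "supp (fa_add f g) \<subseteq> ?S" by (auto simp: supp_def fa_add_def)
  thus ?thesis using fS
    by (simp add: rep_superset[of ?S] fa_add_def distrib_right sum.distrib)
qed

lemma rep_diff: "fin f \<Longrightarrow> fin g \<Longrightarrow> rep (fa_diff f g) v = (\<lambda>x. rep f v x - rep g v x)"
proof -
  assume f: "fin f" and g: "fin g"
  let ?S = "supp f \<union> supp g"
  have fS: "finite ?S" using f g by (simp add: fin_supp)
  have "supp (fa_diff f g) \<subseteq> ?S" by (auto simp: supp_def fa_diff_def)
  thus ?thesis using fS
    by (simp add: rep_superset[of ?S] fa_diff_def left_diff_distrib sum_subtractf)
qed

lemma rep_smult: "fin f \<Longrightarrow> rep (fa_smult c f) v = (\<lambda>x. c * rep f v x)"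
proof -
  assume f: "fin f"
  have fS: "finite (supp f)" using f by (simp add: fin_supp)
  have "supp (fa_smult c f) \<subseteq> supp f" by (auto simp: supp_def fa_smult_def)
  thus ?thesis using fS
    by (simp add: rep_superset[of "supp f"] fa_smult_def sum_distrib_left mult.assoc)
qed

lemma rep_one: "rep fa_one v = v"
proof -
  have "supp fa_one \<subseteq> {[]}" by (auto simp: supp_def fa_one_def split: if_splits)
  thus ?thesis by (simp add: rep_superset[of "{[]}"] fa_one_def)
qed

lemma rep_fgen: "rep (fa_gen g) v = G g v"
proof -
  have "supp (fa_gen g) \<subseteq> {[g]}" by (auto simp: supp_def fa_gen_def split: if_splits)
  thus ?thesis by (simp add: rep_superset[of "{[g]}"] fa_gen_def)
qed

lemma rep_zero_vec: "rep f (\<lambda>x. 0) = (\<lambda>x. 0)"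
  by (simp add: rep_def wop_zero)

lemma rep_fzero: "rep fa_zero v = (\<lambda>x. 0)"
  by (simp add: rep_def supp_def fa_zero_def)

lemma rep_sum: "finite S \<Longrightarrow> rep f (\<lambda>x. \<Sum>i\<in>S. c i * v i x) = (\<lambda>x. \<Sum>i\<in>S. c i * rep f (v i) x)"
  by (simp add: rep_def wop_sum sum_distrib_left sum.swap[of _ S] mult.left_commute)

lemma rep_mult:
  assumes f: "fin f" and g: "fin g"
  shows "rep (fa_mult f g) v = rep f (rep g v)"
proof (rule ext)
  fix x
  let ?A = "supp f" and ?B = "supp g"
  let ?S = "(\<lambda>(u,v). u @ v) ` (?A \<times> ?B)"
  have A: "finite ?A" and B: "finite ?B" using f g by (simp_all add: fin_supp)
  have S: "finite ?S" using A B by simp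
  have "rep (fa_mult f g) v x = (\<Sum>w\<in>?S. fa_mult f g w * wop w v x)"
    using S supp_mult by (simp add: rep_superset[of ?S])
  also have "\<dots> = (\<Sum>w\<in>?S. \<Sum>i\<le>length w. f (take i w) * g (drop i w) * wop (take i w @ drop i w) v x)"
    by (simp add: fa_mult_def sum_distrib_right)
  also have "\<dots> = (\<Sum>u\<in>?A. \<Sum>w\<in>?B. f u * g w * wop (u @ w) v x)"
    by (rule sum_split_words[OF A B S]) (auto simp: supp_def)
  also have "\<dots> = rep f (rep g v) x"
  proof -
    have "wop u (\<lambda>x. \<Sum>w\<in>?B. g w * wop w v x) = (\<lambda>x. \<Sum>w\<in>?B. g w * wop u (wop w v) x)" for u
      using wop_sum[of ?B u g "\<lambda>w. wop w v"] B by simp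
    thus ?thesis by (simp add: rep_def wop_append sum_distrib_left mult.assoc)
  qed
  finally show "rep (fa_mult f g) v x = rep f (rep g v) x" .
qed

lemma kills_ideal:
  assumes R: "\<And>r. r \<in> R \<Longrightarrow> fin r \<and> rep r = (\<lambda>v x. 0) \<and> rep (fa_star r) = (\<lambda>v x. 0)"
  shows "f \<in> star_ideal R \<Longrightarrow> fin f \<and> rep f = (\<lambda>v x. 0) \<and> rep (fa_star f) = (\<lambda>v x. 0)"
proof (induction rule: star_ideal.induct)
  case zero thus ?case by (simp add: rep_fzero fun_eq_iff)
next
  case (gen r x y)
  hence r: "fin r" "rep r = (\<lambda>v x. 0)" "rep (fa_star r) = (\<lambda>v x. 0)" using R by auto
  have "rep (fa_mult (fa_mult x r) y) v = (\<lambda>x. 0)" for v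
    using gen r by (simp add: rep_mult rep_zero_vec)
  moreover have "rep (fa_star (fa_mult (fa_mult x r) y)) v = (\<lambda>x. 0)" for v
    using gen r by (simp add: rep_mult rep_zero_vec)
  ultimately show ?case using gen r by (simp add: fun_eq_iff)
next
  case (add f g) thus ?case by (simp add: rep_add fun_eq_iff)
next
  case (smult f c) thus ?case by (simp add: rep_smult fun_eq_iff)
next
  case (star f) thus ?case by simp
qed

lemma rep_fin_zero: "fin f \<Longrightarrow> fin g \<Longrightarrow> rep (fa_diff f g) = (\<lambda>v x. 0) \<Longrightarrow> rep f = rep g"
  by (auto simp: rep_diff fun_eq_iff)

end

definition zp :: "real \<Rightarrow> int \<Rightarrow> complex" where
  "zp \<theta> m = cis (2 * pi * \<theta> * of_int m)"

lemma zp_add: "zp \<theta> (m + n) = zp \<theta> m * zp \<theta> n"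
  by (simp add: zp_def cis_mult distrib_left)
lemma zp_0[simp]: "zp \<theta> 0 = 1" by (simp add: zp_def)
lemma zp_1: "cis (2 * pi * \<theta>) = zp \<theta> 1" by (simp add: zp_def)
lemma zp_cnj: "cnj (zp \<theta> m) = zp \<theta> (- m)" by (simp add: zp_def cis_cnj)
lemma zp_norm[simp]: "cmod (zp \<theta> m) = 1" by (simp add: zp_def)
lemma zp_nz[simp]: "zp \<theta> m \<noteq> 0" by (simp add: zp_def)
lemma zp_mult: "zp \<theta> m * zp \<theta> n = zp \<theta> (m + n)" by (simp add: zp_add)
lemma zp_mult2: "zp \<theta> m * (zp \<theta> n * c) = zp \<theta> (m + n) * c" by (simp add: zp_add)

context linrep begin

lemma kills_S3:
  fixes p q \<theta> :: real
  defines "z \<equiv> cis (2 * pi * \<theta>)"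
  assumes I1: "\<And>v. G GA (G GB v) = (\<lambda>x. z * G GB (G GA v) x)"
    and I1s: "\<And>v. G GBs (G GAs v) = (\<lambda>x. cnj z * G GAs (G GBs v) x)"
    and I2: "\<And>v. G GA (G GBs v) = (\<lambda>x. cnj z * G GBs (G GA v) x)"
    and I2s: "\<And>v. G GB (G GAs v) = (\<lambda>x. z * G GAs (G GB v) x)"
    and I3: "\<And>v. G GAs (G GA v) = (\<lambda>x. of_real p * G GA (G GAs v) x + of_real (1 - p) * v x)"
    and I4: "\<And>v. G GBs (G GB v) = (\<lambda>x. of_real q * G GB (G GBs v) x + of_real (1 - q) * v x)"
    and I5: "\<And>v. G GA (G GAs (\<lambda>x. v x - G GB (G GBs v) x)) = (\<lambda>x. v x - G GB (G GBs v) x)"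
    and I5s: "\<And>v. G GB (G GBs (\<lambda>x. v x - G GA (G GAs v) x)) = (\<lambda>x. v x - G GA (G GAs v) x)"
  shows "f \<in> S3_ideal p q \<theta> \<Longrightarrow> fin f \<and> rep f = (\<lambda>v x. 0)"
proof -
  assume f: "f \<in> S3_ideal p q \<theta>"
  have "fin r \<and> rep r = (\<lambda>v x. 0) \<and> rep (fa_star r) = (\<lambda>v x. 0)" if r: "r \<in> rels p q \<theta>" for r
  proof -
    from r consider
      "r = fa_diff (fa_mult (fa_gen GA) (fa_gen GB)) (fa_smult z (fa_mult (fa_gen GB) (fa_gen GA)))"
    | "r = fa_diff (fa_mult (fa_gen GA) (fa_gen GBs)) (fa_smult (cnj z) (fa_mult (fa_gen GBs) (fa_gen GA)))"
    | "r = fa_diff (fa_diff (fa_mult (fa_gen GAs) (fa_gen GA)) (fa_smult (complex_of_real p) (fa_mult (fa_gen GA) (fa_gen GAs))))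
               (fa_smult (complex_of_real (1 - p)) fa_one)"
    | "r = fa_diff (fa_diff (fa_mult (fa_gen GBs) (fa_gen GB)) (fa_smult (complex_of_real q) (fa_mult (fa_gen GB) (fa_gen GBs))))
               (fa_smult (complex_of_real (1 - q)) fa_one)"
    | "r = fa_mult (fa_diff fa_one (fa_mult (fa_gen GA) (fa_gen GAs))) (fa_diff fa_one (fa_mult (fa_gen GB) (fa_gen GBs)))"
      unfolding rels_def Let_def z_def by blast
    thus ?thesis
    proof cases
      case 1 show ?thesis unfolding 1
        by (simp add: fun_eq_iff rep_diff rep_smult rep_mult rep_fgen I1 I1s)
    next
      case 2 show ?thesis unfolding 2
        by (simp add: fun_eq_iff rep_diff rep_smult rep_mult rep_fgen I2 I2s)
    next
      case 3 show ?thesis unfolding 3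
        by (simp add: fun_eq_iff rep_diff rep_smult rep_mult rep_fgen rep_one I3)
    next
      case 4 show ?thesis unfolding 4
        by (simp add: fun_eq_iff rep_diff rep_smult rep_mult rep_fgen rep_one I4)
    next
      case 5 show ?thesis unfolding 5
        by (simp add: fun_eq_iff rep_diff rep_smult rep_mult rep_fgen rep_one I5 I5s)
    qed
  qed
  from kills_ideal[OF this f[unfolded S3_ideal_def]] show ?thesis by blast
qed

end

fun Gs :: "real \<Rightarrow> gen \<Rightarrow> (int \<times> int \<Rightarrow> complex) \<Rightarrow> (int \<times> int \<Rightarrow> complex)" where
  "Gs \<theta> GA v = (\<lambda>x. v (fst x - 1, snd x))"
| "Gs \<theta> GAs v = (\<lambda>x. v (fst x + 1, snd x))"
| "Gs \<theta> GB v = (\<lambda>x. zp \<theta> (- fst x) * v (fst x, snd x - 1))"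
| "Gs \<theta> GBs v = (\<lambda>x. zp \<theta> (fst x) * v (fst x, snd x + 1))"

fun G1 :: "real \<Rightarrow> real \<Rightarrow> gen \<Rightarrow> (nat \<Rightarrow> complex) \<Rightarrow> (nat \<Rightarrow> complex)" where
  "G1 p \<theta> GA v = (\<lambda>n. if n = 0 then 0 else v (n - 1))"
| "G1 p \<theta> GAs v = (\<lambda>n. (1 - of_real p ^ (n + 1)) * v (n + 1))"
| "G1 p \<theta> GB v = (\<lambda>n. zp \<theta> (- int n) * v n)"
| "G1 p \<theta> GBs v = (\<lambda>n. zp \<theta> (int n) * v n)"

fun G2 :: "real \<Rightarrow> real \<Rightarrow> gen \<Rightarrow> (nat \<Rightarrow> complex) \<Rightarrow> (nat \<Rightarrow> complex)" where
  "G2 q \<theta> GB v = (\<lambda>n. if n = 0 then 0 else v (n - 1))"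
| "G2 q \<theta> GBs v = (\<lambda>n. (1 - of_real q ^ (n + 1)) * v (n + 1))"
| "G2 q \<theta> GA v = (\<lambda>n. zp \<theta> (int n) * v n)"
| "G2 q \<theta> GAs v = (\<lambda>n. zp \<theta> (- int n) * v n)"

interpretation sig: linrep "Gs \<theta>" for \<theta>
  by unfold_locales (case_tac g; auto simp: fun_eq_iff algebra_simps)

interpretation rho1: linrep "G1 p \<theta>" for p \<theta>
  by unfold_locales (case_tac g; auto simp: fun_eq_iff algebra_simps)

interpretation rho2: linrep "G2 q \<theta>" for q \<theta>
  by unfold_locales (case_tac g; auto simp: fun_eq_iff algebra_simps)

lemma pow_pred: "0 < x \<Longrightarrow> (c::complex) * c ^ (x - Suc 0) = c ^ x"
  by (cases x) auto

lemma sig_kills: "f \<in> S3_ideal p q \<theta> \<Longrightarrow> fin f \<and> sig.rep \<theta> f = (\<lambda>v x. 0)"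
  apply (rule sig.kills_S3)
  apply (unfold zp_1 zp_cnj)
  apply (auto simp: fun_eq_iff zp_mult zp_mult2 algebra_simps pow_pred)
  done

lemma rho1_kills: "f \<in> S3_ideal p q \<theta> \<Longrightarrow> fin f \<and> rho1.rep p \<theta> f = (\<lambda>v x. 0)"
  apply (rule rho1.kills_S3)
  apply (unfold zp_1 zp_cnj)
  apply (auto simp: fun_eq_iff zp_mult zp_mult2 algebra_simps pow_pred)
  done

lemma rho2_kills: "f \<in> S3_ideal p q \<theta> \<Longrightarrow> fin f \<and> rho2.rep q \<theta> f = (\<lambda>v x. 0)"
  apply (rule rho2.kills_S3)
  apply (unfold zp_1 zp_cnj)
  apply (auto simp: fun_eq_iff zp_mult zp_mult2 algebra_simps pow_pred)
  done

fun kd :: "gen list \<Rightarrow> int" where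
  "kd [] = 0" | "kd (GA # w) = kd w + 1" | "kd (GAs # w) = kd w - 1"
| "kd (GB # w) = kd w" | "kd (GBs # w) = kd w"

fun ld :: "gen list \<Rightarrow> int" where
  "ld [] = 0" | "ld (GB # w) = ld w + 1" | "ld (GBs # w) = ld w - 1"
| "ld (GA # w) = ld w" | "ld (GAs # w) = ld w"

fun cw :: "real \<Rightarrow> gen list \<Rightarrow> complex" where
  "cw \<theta> [] = 1" | "cw \<theta> (GA # w) = cw \<theta> w" | "cw \<theta> (GAs # w) = cw \<theta> w"
| "cw \<theta> (GB # w) = cw \<theta> w * zp \<theta> (- kd w)" | "cw \<theta> (GBs # w) = cw \<theta> w * zp \<theta> (kd w)"

lemma kd_bound: "\<bar>kd w\<bar> \<le> int (length w)"
proof (induction w)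
  case (Cons g w) thus ?case by (cases g) auto
qed simp

lemma ld_bound: "\<bar>ld w\<bar> \<le> int (length w)"
proof (induction w)
  case (Cons g w) thus ?case by (cases g) auto
qed simp

lemma wdeg_kd_ld: "wdeg w = kd w + ld w"
proof (induction w)
  case (Cons g w) thus ?case by (cases g) (auto simp: wdeg_def)
qed (simp add: wdeg_def)

lemma cw_norm[simp]: "cmod (cw \<theta> w) = 1"
proof (induction w)
  case (Cons g w) thus ?case by (cases g) (simp_all only: cw.simps norm_mult zp_norm Cons.IH mult_1_left)
qed simp

lemma cw_nz[simp]: "cw \<theta> w \<noteq> 0"
proof
  assume "cw \<theta> w = 0"
  hence "cmod (cw \<theta> w) = 0" by simp
  thus False using cw_norm[of \<theta> w] by linarith
qed

lemma sig_wop: "sig.wop \<theta> w v x = cw \<theta> w * zp \<theta> (-(fst x - kd w) * ld w) * v (fst x - kd w, snd x - ld w)"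
proof (induction w arbitrary: x)
  case (Cons g w)
  show ?case
  proof (cases g)
    case GA thus ?thesis using Cons by (simp add: algebra_simps)
  next
    case GAs thus ?thesis using Cons by (simp add: algebra_simps)
  next
    case GB thus ?thesis using Cons by (simp add: algebra_simps zp_mult zp_mult2)
  next
    case GBs thus ?thesis using Cons by (simp add: algebra_simps zp_mult zp_mult2)
  qed
qed simp

definition dl :: "nat \<Rightarrow> nat \<Rightarrow> complex" where "dl j = (\<lambda>n. if n = j then 1 else 0)"

lemma cmod_1mp: "0 \<le> p \<Longrightarrow> p \<le> 1 \<Longrightarrow> cmod (1 - complex_of_real p ^ n) \<le> 1"
proof -
  assume "0 \<le> p" "p \<le> 1"
  hence "0 \<le> p ^ n" "p ^ n \<le> 1" by (auto intro: power_le_one)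
  moreover have "cmod (1 - complex_of_real p ^ n) = \<bar>1 - p ^ n\<bar>"
    by (metis norm_of_real of_real_1 of_real_diff of_real_power)
  ultimately show ?thesis by linarith
qed

lemma rho1_supp: "rho1.wop p \<theta> w (dl j) i \<noteq> 0 \<Longrightarrow> int i = int j + kd w"
proof (induction w arbitrary: i)
  case Nil thus ?case by (simp add: dl_def split: if_splits)
next
  case (Cons g w)
  show ?case
  proof (cases g)
    case GA thus ?thesis using Cons.prems Cons.IH[of "i - 1"] by (auto split: if_splits)
  next
    case GAs thus ?thesis using Cons.prems Cons.IH[of "i + 1"] by auto
  qed (use Cons in auto)
qed

lemma rho1_le1: "0 \<le> p \<Longrightarrow> p \<le> 1 \<Longrightarrow> cmod (rho1.wop p \<theta> w (dl j) i) \<le> 1"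
proof (induction w arbitrary: i)
  case Nil thus ?case by (simp add: dl_def)
next
  case (Cons g w)
  show ?case
  proof (cases g)
    case GAs
    have "cmod ((1 - complex_of_real p ^ (i + 1)) * rho1.wop p \<theta> w (dl j) (i + 1)) \<le> 1 * 1"
      unfolding norm_mult using Cons cmod_1mp[of p "i+1"] by (intro mult_mono) auto
    thus ?thesis using GAs by simp
  qed (use Cons in \<open>auto simp: norm_mult\<close>)
qed

lemma rho1_approx:
  assumes p: "0 \<le> p" "p \<le> 1"
  shows "length w \<le> j \<Longrightarrow> cmod (rho1.wop p \<theta> w (dl j) i -
      (if int i = int j + kd w then cw \<theta> w * zp \<theta> (- int j * ld w) else 0))
      \<le> real (length w) * p ^ (j - length w)"
proof (induction w arbitrary: i)
  case Nil thus ?case by (simp add: dl_def)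
next
  case (Cons g w)
  let ?E = "\<lambda>i. rho1.wop p \<theta> w (dl j) i"
  let ?M = "\<lambda>i. (if int i = int j + kd w then cw \<theta> w * zp \<theta> (- int j * ld w) else 0)"
  let ?b = "real (length w) * p ^ (j - length w)"
  let ?b' = "real (length (g # w)) * p ^ (j - length (g # w))"
  have lj: "length w \<le> j" "length w < j" using Cons.prems by auto
  have IH: "cmod (?E i - ?M i) \<le> ?b" for i using Cons.IH lj by blast
  have pj: "p ^ (j - length w) \<le> p ^ (j - length (g # w))"
    using p lj by (intro power_decreasing) auto
  have bb: "?b + p ^ (j - length w) \<le> ?b'"
  proof -
    have "?b \<le> real (length w) * p ^ (j - length (g # w))"
      using pj by (intro mult_left_mono) auto
    thus ?thesis using pj by (simp add: algebra_simps)
  qed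
  have b0: "0 \<le> p ^ (j - length w)" using p by simp
  have kb: "\<bar>kd w\<bar> \<le> int (length w)" by (rule kd_bound)
  show ?case
  proof (cases g)
    case GA
    show ?thesis
    proof (cases "i = 0")
      case True
      have "0 \<le> ?b'" using p by simp
      thus ?thesis using True GA kb lj by auto
    next
      case False
      hence "int (i - 1) = int i - 1" by auto
      hence "cmod (rho1.wop p \<theta> (g # w) (dl j) i - (if int i = int j + kd (g # w) then cw \<theta> (g # w) * zp \<theta> (- int j * ld (g # w)) else 0))
             = cmod (?E (i - 1) - ?M (i - 1))" using GA False by auto
      thus ?thesis using IH[of "i - 1"] bb b0 by linarith
    qed
  next
    case GAs
    have eq: "rho1.wop p \<theta> (g # w) (dl j) i - (if int i = int j + kd (g # w) then cw \<theta> (g # w) * zp \<theta> (- int j * ld (g # w)) else 0)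
           = (?E (i + 1) - ?M (i + 1)) - complex_of_real p ^ (i + 1) * ?E (i + 1)"
      using GAs by (simp add: algebra_simps)
    have "cmod (complex_of_real p ^ (i + 1) * ?E (i + 1)) \<le> p ^ (j - length w)"
    proof (cases "?E (i + 1) = 0")
      case False
      hence "int (i + 1) = int j + kd w" by (rule rho1_supp)
      hence "j - length w \<le> i + 1" using kb by auto
      hence "p ^ (i + 1) \<le> p ^ (j - length w)" using p by (intro power_decreasing) auto
      moreover have "cmod (?E (i + 1)) \<le> 1" using rho1_le1 p by blast
      ultimately have "p ^ (i + 1) * cmod (?E (i + 1)) \<le> p ^ (j - length w)"
        using p by (meson mult_left_le order_trans zero_le_power)
      moreover have "cmod (complex_of_real p ^ (i + 1) * ?E (i + 1)) = p ^ (i + 1) * cmod (?E (i + 1))"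
        using p by (simp add: norm_mult norm_power)
      ultimately show ?thesis by simp
    qed (simp add: b0)
    hence "cmod (rho1.wop p \<theta> (g # w) (dl j) i - (if int i = int j + kd (g # w) then cw \<theta> (g # w) * zp \<theta> (- int j * ld (g # w)) else 0))
           \<le> ?b + p ^ (j - length w)"
      unfolding eq using IH[of "i+1"] norm_triangle_ineq4[of "?E (i + 1) - ?M (i + 1)" "complex_of_real p ^ (i + 1) * ?E (i + 1)"]
      by linarith
    thus ?thesis using bb by linarith
  next
    case GB
    have eq: "rho1.wop p \<theta> (g # w) (dl j) i - (if int i = int j + kd (g # w) then cw \<theta> (g # w) * zp \<theta> (- int j * ld (g # w)) else 0)
           = zp \<theta> (- int i) * (?E i - ?M i)"
      using GB by (auto simp: algebra_simps zp_mult zp_mult2)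
    show ?thesis unfolding eq norm_mult using IH[of i] bb b0 by simp
  next
    case GBs
    have eq: "rho1.wop p \<theta> (g # w) (dl j) i - (if int i = int j + kd (g # w) then cw \<theta> (g # w) * zp \<theta> (- int j * ld (g # w)) else 0)
           = zp \<theta> (int i) * (?E i - ?M i)"
      using GBs by (auto simp: algebra_simps zp_mult zp_mult2)
    show ?thesis unfolding eq norm_mult using IH[of i] bb b0 by simp
  qed
qed

lemma rho2_supp: "rho2.wop q \<theta> w (dl j) i \<noteq> 0 \<Longrightarrow> int i = int j + ld w"
proof (induction w arbitrary: i)
  case Nil thus ?case by (simp add: dl_def split: if_splits)
next
  case (Cons g w)
  show ?case
  proof (cases g)
    case GB thus ?thesis using Cons.prems Cons.IH[of "i - 1"] by (auto split: if_splits)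
  next
    case GBs thus ?thesis using Cons.prems Cons.IH[of "i + 1"] by auto
  qed (use Cons in auto)
qed

lemma rho2_le1: "0 \<le> q \<Longrightarrow> q \<le> 1 \<Longrightarrow> cmod (rho2.wop q \<theta> w (dl j) i) \<le> 1"
proof (induction w arbitrary: i)
  case Nil thus ?case by (simp add: dl_def)
next
  case (Cons g w)
  show ?case
  proof (cases g)
    case GBs
    have "cmod ((1 - complex_of_real q ^ (i + 1)) * rho2.wop q \<theta> w (dl j) (i + 1)) \<le> 1 * 1"
      unfolding norm_mult using Cons cmod_1mp[of q "i+1"] by (intro mult_mono) auto
    thus ?thesis using GBs by simp
  qed (use Cons in \<open>auto simp: norm_mult\<close>)
qed

lemma rho2_approx:
  assumes q: "0 \<le> q" "q \<le> 1"
  shows "length w \<le> j \<Longrightarrow> cmod (rho2.wop q \<theta> w (dl j) i -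
      (if int i = int j + ld w then cw \<theta> w * zp \<theta> (kd w * (int j + ld w)) else 0))
      \<le> real (length w) * q ^ (j - length w)"
proof (induction w arbitrary: i)
  case Nil thus ?case by (simp add: dl_def)
next
  case (Cons g w)
  let ?E = "\<lambda>i. rho2.wop q \<theta> w (dl j) i"
  let ?M = "\<lambda>i. (if int i = int j + ld w then cw \<theta> w * zp \<theta> (kd w * (int j + ld w)) else 0)"
  let ?b = "real (length w) * q ^ (j - length w)"
  let ?b' = "real (length (g # w)) * q ^ (j - length (g # w))"
  have lj: "length w \<le> j" "length w < j" using Cons.prems by auto
  have IH: "cmod (?E i - ?M i) \<le> ?b" for i using Cons.IH lj by blast
  have pj: "q ^ (j - length w) \<le> q ^ (j - length (g # w))"
    using q lj by (intro power_decreasing) auto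
  have bb: "?b + q ^ (j - length w) \<le> ?b'"
  proof -
    have "?b \<le> real (length w) * q ^ (j - length (g # w))"
      using pj by (intro mult_left_mono) auto
    thus ?thesis using pj by (simp add: algebra_simps)
  qed
  have b0: "0 \<le> q ^ (j - length w)" using q by simp
  have kb: "\<bar>ld w\<bar> \<le> int (length w)" by (rule ld_bound)
  show ?case
  proof (cases g)
    case GB
    show ?thesis
    proof (cases "i = 0")
      case True
      have "0 \<le> ?b'" using q by simp
      thus ?thesis using True GB kb lj by auto
    next
      case False
      hence "int (i - 1) = int i - 1" by auto
      hence "cmod (rho2.wop q \<theta> (g # w) (dl j) i - (if int i = int j + ld (g # w) then cw \<theta> (g # w) * zp \<theta> (kd (g # w) * (int j + ld (g # w))) else 0))
             = cmod (?E (i - 1) - ?M (i - 1))" using GB False by (auto simp: algebra_simps zp_mult zp_mult2)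
      thus ?thesis using IH[of "i - 1"] bb b0 by linarith
    qed
  next
    case GBs
    have eq: "rho2.wop q \<theta> (g # w) (dl j) i - (if int i = int j + ld (g # w) then cw \<theta> (g # w) * zp \<theta> (kd (g # w) * (int j + ld (g # w))) else 0)
           = (?E (i + 1) - ?M (i + 1)) - complex_of_real q ^ (i + 1) * ?E (i + 1)"
      using GBs by (auto simp: algebra_simps zp_mult zp_mult2)
    have "cmod (complex_of_real q ^ (i + 1) * ?E (i + 1)) \<le> q ^ (j - length w)"
    proof (cases "?E (i + 1) = 0")
      case False
      hence "int (i + 1) = int j + ld w" by (rule rho2_supp)
      hence "j - length w \<le> i + 1" using kb by auto
      hence "q ^ (i + 1) \<le> q ^ (j - length w)" using q by (intro power_decreasing) auto
      moreover have "cmod (?E (i + 1)) \<le> 1" using rho2_le1 q by blast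
      ultimately have "q ^ (i + 1) * cmod (?E (i + 1)) \<le> q ^ (j - length w)"
        using q by (meson mult_left_le order_trans zero_le_power)
      moreover have "cmod (complex_of_real q ^ (i + 1) * ?E (i + 1)) = q ^ (i + 1) * cmod (?E (i + 1))"
        using q by (simp add: norm_mult norm_power)
      ultimately show ?thesis by simp
    qed (simp add: b0)
    hence "cmod (rho2.wop q \<theta> (g # w) (dl j) i - (if int i = int j + ld (g # w) then cw \<theta> (g # w) * zp \<theta> (kd (g # w) * (int j + ld (g # w))) else 0))
           \<le> ?b + q ^ (j - length w)"
      unfolding eq using IH[of "i+1"] norm_triangle_ineq4[of "?E (i + 1) - ?M (i + 1)" "complex_of_real q ^ (i + 1) * ?E (i + 1)"]
      by linarith
    thus ?thesis using bb by linarith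
  next
    case GA
    have eq: "rho2.wop q \<theta> (g # w) (dl j) i - (if int i = int j + ld (g # w) then cw \<theta> (g # w) * zp \<theta> (kd (g # w) * (int j + ld (g # w))) else 0)
           = zp \<theta> (int i) * (?E i - ?M i)"
      using GA by (auto simp: algebra_simps zp_mult zp_mult2)
    show ?thesis unfolding eq norm_mult using IH[of i] bb b0 by simp
  next
    case GAs
    have eq: "rho2.wop q \<theta> (g # w) (dl j) i - (if int i = int j + ld (g # w) then cw \<theta> (g # w) * zp \<theta> (kd (g # w) * (int j + ld (g # w))) else 0)
           = zp \<theta> (- int i) * (?E i - ?M i)"
      using GAs by (auto simp: algebra_simps zp_mult zp_mult2)
    show ?thesis unfolding eq norm_mult using IH[of i] bb b0 by simp
  qed
qed

definition bd :: "gen list \<Rightarrow> int \<times> int" where "bd w = (kd w, ld w)"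

definition coef :: "real \<Rightarrow> fa \<Rightarrow> int \<times> int \<Rightarrow> complex" where
  "coef \<theta> f b = (\<Sum>w\<in>{w\<in>supp f. bd w = b}. f w * cw \<theta> w)"

lemma sum_single:
  assumes "finite A" "a \<in> A" "\<And>b. b \<in> A \<Longrightarrow> b \<noteq> a \<Longrightarrow> g b = 0"
  shows "sum g A = g a"
proof -
  have "sum g A = g a + sum g (A - {a})" by (rule sum.remove[OF assms(1,2)])
  moreover have "sum g (A - {a}) = 0" using assms(3) by (intro sum.neutral) auto
  ultimately show ?thesis by simp
qed

lemma group_sum:
  assumes "finite (supp f)"
  shows "(\<Sum>w\<in>supp f. f w * cw \<theta> w * \<Phi> (bd w)) = (\<Sum>b\<in>bd ` supp f. coef \<theta> f b * \<Phi> b)"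
proof -
  have "(\<Sum>w\<in>supp f. f w * cw \<theta> w * \<Phi> (bd w)) =
        (\<Sum>b\<in>bd ` supp f. \<Sum>w\<in>{w\<in>supp f. bd w = b}. f w * cw \<theta> w * \<Phi> (bd w))"
    by (rule sum.image_gen[OF assms])
  also have "\<dots> = (\<Sum>b\<in>bd ` supp f. coef \<theta> f b * \<Phi> b)"
    unfolding coef_def by (intro sum.cong refl) (auto simp: sum_distrib_right intro!: sum.cong)
  finally show ?thesis .
qed

lemma coef_out: "b \<notin> bd ` supp f \<Longrightarrow> coef \<theta> f b = 0"
  unfolding coef_def by (subst sum.neutral) auto

lemma sig_rep: "fin f \<Longrightarrow> sig.rep \<theta> f v x =
   (\<Sum>b\<in>bd ` supp f. coef \<theta> f b * (zp \<theta> (-(fst x - fst b) * snd b) * v (fst x - fst b, snd x - snd b)))"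
  (is "_ \<Longrightarrow> _ = ?rhs")
proof -
  assume f: "fin f"
  have "sig.rep \<theta> f v x = (\<Sum>w\<in>supp f. f w * cw \<theta> w *
          (\<lambda>b. zp \<theta> (-(fst x - fst b) * snd b) * v (fst x - fst b, snd x - snd b)) (bd w))"
    by (simp add: sig.rep_def sig_wop bd_def mult.assoc)
  also have "\<dots> = ?rhs" by (rule group_sum) (use f in \<open>simp add: fin_supp\<close>)
  finally show ?thesis .
qed

definition d0 :: "int \<times> int \<Rightarrow> complex" where "d0 = (\<lambda>x. if x = (0,0) then 1 else 0)"

lemma sig_rep_d0: "fin f \<Longrightarrow> sig.rep \<theta> f d0 = coef \<theta> f"
proof (rule ext)
  fix x assume f: "fin f"
  have "sig.rep \<theta> f d0 x = (\<Sum>b\<in>bd ` supp f. if b = x then coef \<theta> f b else 0)"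
    unfolding sig_rep[OF f] by (intro sum.cong refl) (auto simp: d0_def prod_eq_iff)
  also have "\<dots> = coef \<theta> f x"
    using f coef_out[of x f \<theta>] by (auto simp: fin_supp sum.delta)
  finally show "sig.rep \<theta> f d0 x = coef \<theta> f x" .
qed

lemma lead_max:
  fixes F H :: "int \<times> int \<Rightarrow> complex" and ph :: "int \<times> int \<Rightarrow> int \<times> int \<Rightarrow> complex"
  assumes BF: "finite BF" and F0: "\<And>b. b \<notin> BF \<Longrightarrow> F b = 0"
    and BH: "finite BH" and H0: "\<And>b. b \<notin> BH \<Longrightarrow> H b = 0"
    and SF: "{b\<in>BF. F b \<noteq> 0} \<noteq> {}" and SH: "{b\<in>BH. H b \<noteq> 0} \<noteq> {}"
    and ph: "\<And>x b. ph x b \<noteq> 0"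
    and eq: "\<And>x. (\<Sum>b\<in>BF. F b * (ph x b * H (fst x - fst b, snd x - snd b))) = (if x = (0,0) then 1 else 0)"
  shows "fst (Max {b\<in>BF. F b \<noteq> 0}) + fst (Max {b\<in>BH. H b \<noteq> 0}) = 0 \<and>
         snd (Max {b\<in>BF. F b \<noteq> 0}) + snd (Max {b\<in>BH. H b \<noteq> 0}) = 0"
proof -
  let ?SF = "{b\<in>BF. F b \<noteq> 0}" and ?SH = "{b\<in>BH. H b \<noteq> 0}"
  define m where "m = Max ?SF"
  define n where "n = Max ?SH"
  have fSF: "finite ?SF" and fSH: "finite ?SH" using BF BH by auto
  have m: "m \<in> ?SF" unfolding m_def using fSF SF by (rule Max_in)
  have n: "n \<in> ?SH" unfolding n_def using fSH SH by (rule Max_in)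
  have mle: "b \<le> m" if "b \<in> ?SF" for b unfolding m_def using fSF that by simp
  have nle: "b \<le> n" if "b \<in> ?SH" for b unfolding n_def using fSH that by simp
  define x where "x = (fst m + fst n, snd m + snd n)"
  have "(\<Sum>b\<in>BF. F b * (ph x b * H (fst x - fst b, snd x - snd b))) = F m * (ph x m * H (fst x - fst m, snd x - snd m))"
  proof (rule sum_single[OF BF])
    show "m \<in> BF" using m by simp
  next
    fix b assume b: "b \<in> BF" "b \<noteq> m"
    show "F b * (ph x b * H (fst x - fst b, snd x - snd b)) = 0"
    proof (cases "F b = 0")
      case False
      hence "b < m" using mle[of b] b by auto
      hence "n < (fst x - fst b, snd x - snd b)"
        unfolding x_def by (cases b; cases m; cases n) auto
      hence "(fst x - fst b, snd x - snd b) \<notin> ?SH" using nle by (meson leD)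
      hence "H (fst x - fst b, snd x - snd b) = 0" using H0 by blast
      thus ?thesis by simp
    qed simp
  qed
  moreover have "F m * (ph x m * H (fst x - fst m, snd x - snd m)) \<noteq> 0" using m n ph by (simp add: x_def)
  ultimately have "x = (0,0)" using eq[of x] by (auto split: if_splits)
  thus ?thesis unfolding x_def m_def n_def by simp
qed

lemma lead_min:
  fixes F H :: "int \<times> int \<Rightarrow> complex" and ph :: "int \<times> int \<Rightarrow> int \<times> int \<Rightarrow> complex"
  assumes BF: "finite BF" and F0: "\<And>b. b \<notin> BF \<Longrightarrow> F b = 0"
    and BH: "finite BH" and H0: "\<And>b. b \<notin> BH \<Longrightarrow> H b = 0"
    and SF: "{b\<in>BF. F b \<noteq> 0} \<noteq> {}" and SH: "{b\<in>BH. H b \<noteq> 0} \<noteq> {}"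
    and ph: "\<And>x b. ph x b \<noteq> 0"
    and eq: "\<And>x. (\<Sum>b\<in>BF. F b * (ph x b * H (fst x - fst b, snd x - snd b))) = (if x = (0,0) then 1 else 0)"
  shows "fst (Min {b\<in>BF. F b \<noteq> 0}) + fst (Min {b\<in>BH. H b \<noteq> 0}) = 0 \<and>
         snd (Min {b\<in>BF. F b \<noteq> 0}) + snd (Min {b\<in>BH. H b \<noteq> 0}) = 0"
proof -
  let ?SF = "{b\<in>BF. F b \<noteq> 0}" and ?SH = "{b\<in>BH. H b \<noteq> 0}"
  define m where "m = Min ?SF"
  define n where "n = Min ?SH"
  have fSF: "finite ?SF" and fSH: "finite ?SH" using BF BH by auto
  have m: "m \<in> ?SF" unfolding m_def using fSF SF by (rule Min_in)
  have n: "n \<in> ?SH" unfolding n_def using fSH SH by (rule Min_in)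
  have mle: "m \<le> b" if "b \<in> ?SF" for b unfolding m_def using fSF that by simp
  have nle: "n \<le> b" if "b \<in> ?SH" for b unfolding n_def using fSH that by simp
  define x where "x = (fst m + fst n, snd m + snd n)"
  have "(\<Sum>b\<in>BF. F b * (ph x b * H (fst x - fst b, snd x - snd b))) = F m * (ph x m * H (fst x - fst m, snd x - snd m))"
  proof (rule sum_single[OF BF])
    show "m \<in> BF" using m by simp
  next
    fix b assume b: "b \<in> BF" "b \<noteq> m"
    show "F b * (ph x b * H (fst x - fst b, snd x - snd b)) = 0"
    proof (cases "F b = 0")
      case False
      hence "m < b" using mle[of b] b by auto
      hence "(fst x - fst b, snd x - snd b) < n"
        unfolding x_def by (cases b; cases m; cases n) auto
      hence "(fst x - fst b, snd x - snd b) \<notin> ?SH" using nle by (meson leD)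
      hence "H (fst x - fst b, snd x - snd b) = 0" using H0 by blast
      thus ?thesis by simp
    qed simp
  qed
  moreover have "F m * (ph x m * H (fst x - fst m, snd x - snd m)) \<noteq> 0" using m n ph by (simp add: x_def)
  ultimately have "x = (0,0)" using eq[of x] by (auto split: if_splits)
  thus ?thesis unfolding x_def m_def n_def by simp
qed

lemma unit_mono:
  fixes F H :: "int \<times> int \<Rightarrow> complex" and ph :: "int \<times> int \<Rightarrow> int \<times> int \<Rightarrow> complex"
  assumes BF: "finite BF" and F0: "\<And>b. b \<notin> BF \<Longrightarrow> F b = 0"
    and BH: "finite BH" and H0: "\<And>b. b \<notin> BH \<Longrightarrow> H b = 0"
    and ph: "\<And>x b. ph x b \<noteq> 0"
    and eq: "\<And>x. (\<Sum>b\<in>BF. F b * (ph x b * H (fst x - fst b, snd x - snd b))) = (if x = (0,0) then 1 else 0)"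
  shows "\<exists>m. m \<in> BF \<and> (\<forall>b. b \<noteq> m \<longrightarrow> F b = 0) \<and> (\<forall>b. b \<noteq> (- fst m, - snd m) \<longrightarrow> H b = 0)
          \<and> F m * (ph (0,0) m * H (- fst m, - snd m)) = 1"
proof -
  let ?SF = "{b\<in>BF. F b \<noteq> 0}" and ?SH = "{b\<in>BH. H b \<noteq> 0}"
  have SF: "?SF \<noteq> {}"
  proof
    assume "?SF = {}"
    hence "(\<Sum>b\<in>BF. F b * (ph (0,0) b * H (fst (0::int,0::int) - fst b, snd (0::int,0::int) - snd b))) = 0"
      by (intro sum.neutral) auto
    thus False using eq[of "(0,0)"] by simp
  qed
  have SH: "?SH \<noteq> {}"
  proof
    assume "?SH = {}"
    hence "(\<Sum>b\<in>BF. F b * (ph (0,0) b * H (fst (0::int,0::int) - fst b, snd (0::int,0::int) - snd b))) = 0"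
      using H0 by (intro sum.neutral) (metis (mono_tags, lifting) empty_Collect_eq mult_zero_right)
    thus False using eq[of "(0,0)"] by simp
  qed
  have fSF: "finite ?SF" and fSH: "finite ?SH" using BF BH by auto
  note mx = lead_max[OF BF F0 BH H0 SF SH ph eq]
  note mn = lead_min[OF BF F0 BH H0 SF SH ph eq]
  have "Min ?SH \<le> Max ?SH" using fSH SH by (meson Max_ge Min_in)
  hence "Max ?SF \<le> Min ?SF" using mx mn
    by (cases "Min ?SH"; cases "Max ?SH"; cases "Min ?SF"; cases "Max ?SF") auto
  hence eqF: "Max ?SF = Min ?SF" using fSF SF by (meson Max_ge Min_in antisym order_trans Min_le Max_in)
  have "Min ?SH \<le> Max ?SH" using fSH SH by (meson Max_ge Min_in)
  hence eqH: "Max ?SH = Min ?SH" using mx mn eqF by (cases "Min ?SH"; cases "Max ?SH") auto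
  define m where "m = Max ?SF"
  have m: "m \<in> ?SF" unfolding m_def using fSF SF by (rule Max_in)
  have Fm: "F b = 0" if "b \<noteq> m" for b
  proof (rule ccontr)
    assume "F b \<noteq> 0"
    hence "b \<in> ?SF" using F0 by blast
    hence "b \<le> Max ?SF" "Min ?SF \<le> b" using fSF by auto
    hence "b \<le> m" "m \<le> b" unfolding m_def using eqF by auto
    thus False using that by simp
  qed
  have hm: "Max ?SH = (- fst m, - snd m)" using mx unfolding m_def by (simp add: prod_eq_iff)
  have Hm: "H b = 0" if "b \<noteq> (- fst m, - snd m)" for b
  proof (rule ccontr)
    assume "H b \<noteq> 0"
    hence "b \<in> ?SH" using H0 by blast
    hence "b \<le> Max ?SH" "Min ?SH \<le> b" using fSH by auto
    thus False using that eqH hm by simp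
  qed
  have "(\<Sum>b\<in>BF. F b * (ph (0,0) b * H (fst (0::int,0::int) - fst b, snd (0::int,0::int) - snd b)))
         = F m * (ph (0,0) m * H (fst (0::int,0::int) - fst m, snd (0::int,0::int) - snd m))"
    by (rule sum_single[OF BF]) (use Fm m in auto)
  hence "F m * (ph (0,0) m * H (- fst m, - snd m)) = 1" using eq[of "(0,0)"] by simp
  thus ?thesis using m Fm Hm by blast
qed

lemma cnt_lemma:
  fixes k :: int and L K :: nat
  assumes kL: "\<bar>k\<bar> \<le> int L" and LK: "L \<le> K"
  shows "(\<Sum>i\<in>{K-L..<K}. \<Sum>j\<in>{K..<K+L+1}. (if int j = int i + k then 1 else 0 :: complex)) = of_nat (nat k)"
proof (cases "k \<le> 0")
  case True
  hence "(if int j = int i + k then 1 else 0 :: complex) = 0" if "i \<in> {K-L..<K}" "j \<in> {K..<K+L+1}" for i j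
    using that by auto
  hence "(\<Sum>i\<in>{K-L..<K}. \<Sum>j\<in>{K..<K+L+1}. (if int j = int i + k then 1 else 0 :: complex)) = 0"
    by (intro sum.neutral ballI) auto
  thus ?thesis using True by simp
next
  case False
  have inner: "(\<Sum>j\<in>{K..<K+L+1}. (if int j = int i + k then 1 else 0 :: complex))
               = (if i + nat k \<in> {K..<K+L+1} then 1 else 0)" for i
  proof -
    have "(\<Sum>j\<in>{K..<K+L+1}. (if int j = int i + k then 1 else 0 :: complex))
          = (\<Sum>j\<in>{K..<K+L+1}. (if j = i + nat k then 1 else 0 :: complex))"
      using False by (intro sum.cong refl) auto
    thus ?thesis by (simp add: sum.delta')
  qed
  have set: "{i \<in> {K-L..<K}. i + nat k \<in> {K..<K+L+1}} = {K - nat k..<K}"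
    using False kL LK by auto
  have "(\<Sum>i\<in>{K-L..<K}. (if i + nat k \<in> {K..<K+L+1} then 1 else 0 :: complex))
        = (\<Sum>i\<in>{i \<in> {K-L..<K}. i + nat k \<in> {K..<K+L+1}}. 1)"
    by (rule sum.inter_filter[symmetric]) simp
  also have "\<dots> = of_nat (nat k)" unfolding set using False kL LK by simp
  finally show ?thesis unfolding inner .
qed

lemma prod_err:
  fixes a a0 g g0 :: complex
  assumes "cmod (a - a0) \<le> x" "cmod (g - g0) \<le> y" "cmod a0 \<le> B" "cmod g0 \<le> B" "y \<le> C"
  shows "cmod (a * g - a0 * g0) \<le> x * (B + C) + B * y"
proof -
  have e: "a * g - a0 * g0 = (a - a0) * g + a0 * (g - g0)" by (simp add: algebra_simps)
  have "cmod g \<le> cmod g0 + cmod (g - g0)" by (rule norm_triangle_sub)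
  hence g: "cmod g \<le> B + C" using assms by linarith
  have x0: "0 \<le> x" using assms(1) norm_ge_zero order_trans by blast
  have B0: "0 \<le> B" using assms(3) norm_ge_zero order_trans by blast
  have "cmod ((a - a0) * g) \<le> x * (B + C)"
    unfolding norm_mult using assms(1) g x0 by (intro mult_mono) auto
  moreover have "cmod (a0 * (g - g0)) \<le> B * y"
    unfolding norm_mult using assms B0 by (intro mult_mono) auto
  moreover have "cmod ((a - a0) * g + a0 * (g - g0)) \<le> cmod ((a - a0) * g) + cmod (a0 * (g - g0))"
    by (rule norm_triangle_ineq)
  ultimately show ?thesis unfolding e by linarith
qed

definition DD :: "nat \<Rightarrow> nat \<Rightarrow> (nat \<Rightarrow> nat \<Rightarrow> complex) \<Rightarrow> (nat \<Rightarrow> nat \<Rightarrow> complex) \<Rightarrow> complex" where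
  "DD L K X Y = (\<Sum>i\<in>{K-L..<K}. \<Sum>j\<in>{K..<K+L+1}. X i j * Y j i - Y i j * X j i)"

lemma DD_zero:
  fixes T Gm :: "nat \<Rightarrow> nat \<Rightarrow> complex"
  assumes band: "\<And>i j. L < i - j \<or> L < j - i \<Longrightarrow> T i j = 0 \<and> Gm i j = 0"
    and inv1: "\<And>i n. i + L < n \<Longrightarrow> (\<Sum>j<n. T i j * Gm j i) = 1"
    and inv2: "\<And>i n. i + L < n \<Longrightarrow> (\<Sum>j<n. Gm i j * T j i) = 1"
    and LK: "L \<le> K"
  shows "DD L K T Gm = 0"
proof -
  let ?V = "{K..<K+L+1}"
  have split: "(\<Sum>j<K+L+1. f j) = (\<Sum>j<K. f j) + (\<Sum>j\<in>?V. f j)" for f :: "nat \<Rightarrow> complex"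
    by (simp add: lessThan_atLeast0 sum.atLeastLessThan_concat)
  have r1: "(\<Sum>j<K. T i j * Gm j i) + (\<Sum>j\<in>?V. T i j * Gm j i) = 1" if "i < K" for i
  proof -
    have "(\<Sum>j<K+L+1. T i j * Gm j i) = 1" by (rule inv1) (use that in simp)
    thus ?thesis unfolding split .
  qed
  have r2: "(\<Sum>j<K. Gm i j * T j i) + (\<Sum>j\<in>?V. Gm i j * T j i) = 1" if "i < K" for i
  proof -
    have "(\<Sum>j<K+L+1. Gm i j * T j i) = 1" by (rule inv2) (use that in simp)
    thus ?thesis unfolding split .
  qed
  have sw: "(\<Sum>i<K. \<Sum>j<K. T i j * Gm j i) = (\<Sum>i<K. \<Sum>j<K. Gm i j * T j i)"
    by (subst sum.swap) (simp add: mult.commute)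
  have "(\<Sum>i<K. (\<Sum>j<K. T i j * Gm j i) + (\<Sum>j\<in>?V. T i j * Gm j i))
      = (\<Sum>i<K. (\<Sum>j<K. Gm i j * T j i) + (\<Sum>j\<in>?V. Gm i j * T j i))"
    using r1 r2 by simp
  hence "(\<Sum>i<K. \<Sum>j\<in>?V. T i j * Gm j i) = (\<Sum>i<K. \<Sum>j\<in>?V. Gm i j * T j i)"
    using sw by (simp add: sum.distrib)
  hence full: "(\<Sum>i<K. \<Sum>j\<in>?V. T i j * Gm j i - Gm i j * T j i) = 0"
    by (simp add: sum_subtractf)
  have z: "(\<Sum>j\<in>?V. T i j * Gm j i - Gm i j * T j i) = 0" if "i < K - L" for i
  proof (intro sum.neutral ballI)
    fix j assume "j \<in> ?V"
    hence "L < j - i" using that by auto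
    thus "T i j * Gm j i - Gm i j * T j i = 0" using band[of i j] band[of j i] by auto
  qed
  have "(\<Sum>i<K. \<Sum>j\<in>?V. T i j * Gm j i - Gm i j * T j i)
        = (\<Sum>i\<in>{0..<K-L}. \<Sum>j\<in>?V. T i j * Gm j i - Gm i j * T j i)
          + (\<Sum>i\<in>{K-L..<K}. \<Sum>j\<in>?V. T i j * Gm j i - Gm i j * T j i)"
    by (simp add: lessThan_atLeast0 sum.atLeastLessThan_concat)
  also have "(\<Sum>i\<in>{0..<K-L}. \<Sum>j\<in>?V. T i j * Gm j i - Gm i j * T j i) = 0"
    using z by (intro sum.neutral) auto
  finally show ?thesis using full by (simp add: DD_def)
qed

lemma DD_model:
  fixes k :: int and \<alpha> \<beta> :: "nat \<Rightarrow> complex"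
  assumes kL: "\<bar>k\<bar> \<le> int L" and LK: "L \<le> K"
    and ab: "\<And>i j. int i = int j + k \<Longrightarrow> \<alpha> j * \<beta> i = 1"
  shows "DD L K (\<lambda>i j. if int i = int j + k then \<alpha> j else 0) (\<lambda>i j. if int i = int j - k then \<beta> j else 0)
         = - of_int k"
proof -
  let ?M = "\<lambda>i j. if int i = int j + k then \<alpha> j else 0"
  let ?M' = "\<lambda>i j. if int i = int j - k then \<beta> j else 0"
  have t: "?M i j * ?M' j i - ?M' i j * ?M j i
        = (if int j = int i + (-k) then 1 else 0) - (if int j = int i + k then 1 else 0)" for i j
    using ab[of i j] ab[of j i] by (auto simp: mult.commute)
  have "DD L K ?M ?M' = (\<Sum>i\<in>{K-L..<K}. \<Sum>j\<in>{K..<K+L+1}. (if int j = int i + (-k) then 1 else 0))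
          - (\<Sum>i\<in>{K-L..<K}. \<Sum>j\<in>{K..<K+L+1}. (if int j = int i + k then 1 else 0))"
    unfolding DD_def t by (simp add: sum_subtractf)
  also have "\<dots> = of_nat (nat (-k)) - of_nat (nat k)"
    using cnt_lemma[of "-k" L K] cnt_lemma[of k L K] kL LK by simp
  also have "\<dots> = - of_int k" by (cases "k \<le> 0") (simp_all add: of_nat_nat)
  finally show ?thesis .
qed

lemma index_zero:
  fixes T Gm :: "nat \<Rightarrow> nat \<Rightarrow> complex" and k :: int and \<alpha> \<beta> :: "nat \<Rightarrow> complex"
    and L Lb :: nat and C B r :: real
  assumes band: "\<And>i j. L < i - j \<or> L < j - i \<Longrightarrow> T i j = 0 \<and> Gm i j = 0"
    and inv1: "\<And>i n. i + L < n \<Longrightarrow> (\<Sum>j<n. T i j * Gm j i) = 1"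
    and inv2: "\<And>i n. i + L < n \<Longrightarrow> (\<Sum>j<n. Gm i j * T j i) = 1"
    and kL: "\<bar>k\<bar> \<le> int L"
    and ab: "\<And>i j. int i = int j + k \<Longrightarrow> \<alpha> j * \<beta> i = 1"
    and aT: "\<And>i j. Lb \<le> j \<Longrightarrow> cmod (T i j - (if int i = int j + k then \<alpha> j else 0)) \<le> C * r ^ (j - Lb)"
    and aG: "\<And>i j. Lb \<le> j \<Longrightarrow> cmod (Gm i j - (if int i = int j - k then \<beta> j else 0)) \<le> C * r ^ (j - Lb)"
    and bA: "\<And>j. cmod (\<alpha> j) \<le> B" and bB: "\<And>j. cmod (\<beta> j) \<le> B"
    and r: "0 \<le> r" "r < 1" and C: "0 \<le> C"
  shows "k = 0"
proof -
  let ?M = "\<lambda>i j. if int i = int j + k then \<alpha> j else 0"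
  let ?M' = "\<lambda>i j. if int i = int j - k then \<beta> j else 0"
  have B: "0 \<le> B" using bA[of 0] by (meson norm_ge_zero order_trans)
  define E0 where "E0 = 2 * (C * (B + C) + B * C)"
  have E0: "0 \<le> E0" unfolding E0_def using B C by simp
  define X where "X = real L * real (L + 1) * E0"
  have X: "0 \<le> X" unfolding X_def using E0 by simp
  obtain n where n: "r ^ n < 1 / (X + 1)" using real_arch_pow_inv[of "1 / (X + 1)" r] X r by auto
  define K where "K = L + Lb + n"
  have LK: "L \<le> K" unfolding K_def by simp
  define \<rho> where "\<rho> = r ^ n"
  have \<rho>0: "0 \<le> \<rho>" unfolding \<rho>_def using r by simp
  have rle: "C * r ^ (j - Lb) \<le> C * \<rho>" if "K - L \<le> j" for j
  proof -
    have "n \<le> j - Lb" using that unfolding K_def by simp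
    hence "r ^ (j - Lb) \<le> r ^ n" using r by (intro power_decreasing) auto
    thus ?thesis unfolding \<rho>_def using C by (intro mult_left_mono) auto
  qed
  have rle1: "C * \<rho> \<le> C" unfolding \<rho>_def using r C by (simp add: mult_left_le power_le_one)
  have trm: "cmod ((T i j * Gm j i - Gm i j * T j i) - (?M i j * ?M' j i - ?M' i j * ?M j i)) \<le> E0 * \<rho>"
    if i: "i \<in> {K-L..<K}" and j: "j \<in> {K..<K+L+1}" for i j
  proof -
    have ji: "K - L \<le> j" "K - L \<le> i" "Lb \<le> j" "Lb \<le> i" using i j unfolding K_def by auto
    have Mb: "cmod (?M a b) \<le> B" "cmod (?M' a b) \<le> B" for a b using bA bB B by auto
    have b1: "cmod (T i j - ?M i j) \<le> C * \<rho>" using aT[of j i] rle[of j] ji by linarith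
    have b2: "cmod (Gm j i - ?M' j i) \<le> C * \<rho>" using aG[of i j] rle[of i] ji by linarith
    have b3: "cmod (Gm i j - ?M' i j) \<le> C * \<rho>" using aG[of j i] rle[of j] ji by linarith
    have b4: "cmod (T j i - ?M j i) \<le> C * \<rho>" using aT[of i j] rle[of i] ji by linarith
    have e1: "cmod (T i j * Gm j i - ?M i j * ?M' j i) \<le> C * \<rho> * (B + C) + B * (C * \<rho>)"
      by (rule prod_err[OF b1 b2 Mb(1) Mb(2) rle1])
    have e2: "cmod (Gm i j * T j i - ?M' i j * ?M j i) \<le> C * \<rho> * (B + C) + B * (C * \<rho>)"
      by (rule prod_err[OF b3 b4 Mb(2) Mb(1) rle1])
    have "cmod ((T i j * Gm j i - Gm i j * T j i) - (?M i j * ?M' j i - ?M' i j * ?M j i))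
          = cmod ((T i j * Gm j i - ?M i j * ?M' j i) - (Gm i j * T j i - ?M' i j * ?M j i))"
      by (simp add: algebra_simps)
    also have "\<dots> \<le> cmod (T i j * Gm j i - ?M i j * ?M' j i) + cmod (Gm i j * T j i - ?M' i j * ?M j i)"
      by (rule norm_triangle_ineq4)
    also have "\<dots> \<le> E0 * \<rho>" using e1 e2 unfolding E0_def by (simp add: algebra_simps)
    finally show ?thesis .
  qed
  have diffeq: "DD L K T Gm - DD L K ?M ?M' = (\<Sum>i\<in>{K-L..<K}. \<Sum>j\<in>{K..<K+L+1}.
          (T i j * Gm j i - Gm i j * T j i) - (?M i j * ?M' j i - ?M' i j * ?M j i))"
    unfolding DD_def by (simp add: sum_subtractf)
  hence "cmod (DD L K T Gm - DD L K ?M ?M') \<le> (\<Sum>i\<in>{K-L..<K}. \<Sum>j\<in>{K..<K+L+1}. E0 * \<rho>)"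
  proof -
    have "cmod (\<Sum>i\<in>{K-L..<K}. \<Sum>j\<in>{K..<K+L+1}. (T i j * Gm j i - Gm i j * T j i) - (?M i j * ?M' j i - ?M' i j * ?M j i))
        \<le> (\<Sum>i\<in>{K-L..<K}. cmod (\<Sum>j\<in>{K..<K+L+1}. (T i j * Gm j i - Gm i j * T j i) - (?M i j * ?M' j i - ?M' i j * ?M j i)))"
      by (rule norm_sum)
    also have "\<dots> \<le> (\<Sum>i\<in>{K-L..<K}. \<Sum>j\<in>{K..<K+L+1}. cmod ((T i j * Gm j i - Gm i j * T j i) - (?M i j * ?M' j i - ?M' i j * ?M j i)))"
      by (intro sum_mono norm_sum)
    also have "\<dots> \<le> (\<Sum>i\<in>{K-L..<K}. \<Sum>j\<in>{K..<K+L+1}. E0 * \<rho>)"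
      by (intro sum_mono trm) auto
    finally show ?thesis using diffeq by simp
  qed
  also have "\<dots> = real L * real (L + 1) * (E0 * \<rho>)" using LK by simp
  finally have le: "cmod (DD L K T Gm - DD L K ?M ?M') \<le> X * \<rho>" unfolding X_def by (simp add: mult.assoc)
  have "DD L K T Gm - DD L K ?M ?M' = of_int k"
    using DD_zero[OF band inv1 inv2 LK] DD_model[OF kL LK ab] by simp
  hence "\<bar>real_of_int k\<bar> \<le> X * \<rho>" using le by (metis norm_of_int)
  moreover have "X * \<rho> < 1"
  proof -
    have "X * \<rho> \<le> (X + 1) * \<rho>" using \<rho>0 by (simp add: algebra_simps)
    also have "\<dots> < (X + 1) * (1 / (X + 1))" using n X unfolding \<rho>_def by (intro mult_strict_left_mono) auto
    also have "\<dots> = 1" using X by simp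
    finally show ?thesis .
  qed
  ultimately show "k = 0" by linarith
qed

definition gz :: "nat \<Rightarrow> int \<Rightarrow> complex" where
  "gz N m = cis (2 * pi * of_int m / of_nat N)"

lemma gz_add: "gz N (a + b) = gz N a * gz N b"
  by (simp add: gz_def cis_mult add_divide_distrib distrib_left)

lemma gz_cnj: "cnj (gz N m) = gz N (- m)"
  by (simp add: gz_def cis_cnj)

lemma gz_pow: "gz N m ^ t = gz N (int t * m)"
  unfolding gz_def DeMoivre by (rule arg_cong[where f=cis]) (simp add: mult_ac)

lemma rootsum:
  assumes N: "0 < N"
  shows "(\<Sum>t<N. gz N (int t * m)) = (if int N dvd m then of_nat N else 0)"
proof (cases "int N dvd m")
  case True
  then obtain c where c: "m = int N * c" by blast
  have "gz N (int t * m) = 1" for t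
  proof -
    have "2 * pi * of_int (int t * m) / of_nat N = 2 * pi * of_int (int t * c)"
      using N by (simp add: c field_simps)
    thus ?thesis unfolding gz_def by simp
  qed
  thus ?thesis using True by simp
next
  case False
  have ne: "gz N m \<noteq> 1"
  proof
    assume "gz N m = 1"
    hence "cos (2 * pi * of_int m / of_nat N) = 1"
      unfolding gz_def by (metis cis.sel(1) one_complex.sel(1))
    then obtain n :: int where "2 * pi * of_int m / of_nat N = of_int n * 2 * pi"
      using cos_one_2pi_int by blast
    hence "real_of_int m = of_int n * of_nat N" using N by (simp add: field_simps)
    hence "m = n * int N" by (metis of_int_eq_iff of_int_mult of_int_of_nat_eq)
    thus False using False by simp
  qed
  have "gz N m ^ N = 1"
  proof -
    have e: "2 * pi * of_int (int N * m) / of_nat N = 2 * pi * of_int m" using N by simp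
    have "cis (2 * pi * of_int m) = 1" by (rule cis_multiple_2pi) simp
    hence "gz N (int N * m) = 1" unfolding gz_def e .
    thus ?thesis by (simp add: gz_pow)
  qed
  hence "(\<Sum>t<N. gz N m ^ t) = 0" using ne by (simp add: sum_gp_strict)
  thus ?thesis using False by (simp add: gz_pow)
qed

lemma wdeg_append: "wdeg (u @ v) = wdeg u + wdeg v" by (simp add: wdeg_def)
lemma wdeg_star: "wdeg (rev (map star_gen w)) = - wdeg w"
proof (induction w)
  case (Cons g w) thus ?case by (cases g) (auto simp: wdeg_def)
qed (simp add: wdeg_def)

definition gm :: "nat \<Rightarrow> nat \<Rightarrow> fa \<Rightarrow> fa" where
  "gm N t f = (\<lambda>w. gz N (int t * wdeg w) * f w)"

lemma gm_mult: "gm N t (fa_mult f g) = fa_mult (gm N t f) (gm N t g)"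
proof (rule ext)
  fix w :: "gen list"
  have "gz N (int t * wdeg w) = gz N (int t * wdeg (take i w)) * gz N (int t * wdeg (drop i w))" for i
  proof -
    have "wdeg w = wdeg (take i w) + wdeg (drop i w)" by (metis append_take_drop_id wdeg_append)
    thus ?thesis by (simp add: distrib_left gz_add)
  qed
  thus "gm N t (fa_mult f g) w = fa_mult (gm N t f) (gm N t g) w"
    by (simp add: gm_def fa_mult_def sum_distrib_left mult_ac)
qed

lemma gm_star: "gm N t (fa_star f) = fa_star (gm N t f)"
  by (simp add: gm_def fa_star_def wdeg_star gz_cnj)

lemma gm_add: "gm N t (fa_add f g) = fa_add (gm N t f) (gm N t g)"
  by (simp add: gm_def fa_add_def distrib_left)
lemma gm_smult: "gm N t (fa_smult c f) = fa_smult c (gm N t f)"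
  by (simp add: gm_def fa_smult_def mult_ac)
lemma gm_zero: "gm N t fa_zero = fa_zero"
  by (simp add: gm_def fa_zero_def)

lemma fin_gm: "fin f \<Longrightarrow> fin (gm N t f)"
proof -
  assume "fin f"
  have "{w. gm N t f w \<noteq> 0} \<subseteq> {w. f w \<noteq> 0}" by (auto simp: gm_def)
  thus ?thesis using \<open>fin f\<close> unfolding fin_def using finite_subset by blast
qed

definition homog :: "int \<Rightarrow> fa \<Rightarrow> bool" where
  "homog d f \<longleftrightarrow> (\<forall>w. f w \<noteq> 0 \<longrightarrow> wdeg w = d)"

lemma gm_homog: "homog d r \<Longrightarrow> gm N t r = fa_smult (gz N (int t * d)) r"
  by (auto simp: homog_def gm_def fa_smult_def fun_eq_iff)

lemma homog_diff: "homog d f \<Longrightarrow> homog d g \<Longrightarrow> homog d (fa_diff f g)"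
  unfolding homog_def fa_diff_def
proof (intro allI impI)
  fix w assume f: "\<forall>w. f w \<noteq> 0 \<longrightarrow> wdeg w = d" and g: "\<forall>w. g w \<noteq> 0 \<longrightarrow> wdeg w = d"
    and "f w - g w \<noteq> 0"
  hence "f w \<noteq> 0 \<or> g w \<noteq> 0" by auto
  thus "wdeg w = d" using f g by blast
qed
lemma homog_smult: "homog d f \<Longrightarrow> homog d (fa_smult c f)"
  by (auto simp: homog_def fa_smult_def)
lemma homog_one: "homog 0 fa_one"
  by (auto simp: homog_def fa_one_def wdeg_def split: if_splits)
lemma homog_gen: "homog (deg_gen g) (fa_gen g)"
  by (auto simp: homog_def fa_gen_def wdeg_def split: if_splits)
lemma homog_mult: "homog d f \<Longrightarrow> homog e g \<Longrightarrow> d + e = c \<Longrightarrow> homog c (fa_mult f g)"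
proof -
  assume f: "homog d f" and g: "homog e g" and c: "d + e = c"
  show ?thesis unfolding homog_def
  proof (intro allI impI)
    fix w assume "fa_mult f g w \<noteq> 0"
    then obtain i where "f (take i w) * g (drop i w) \<noteq> 0"
      unfolding fa_mult_def by (auto elim: sum.not_neutral_contains_not_neutral)
    hence "wdeg (take i w) = d" "wdeg (drop i w) = e" using f g by (auto simp: homog_def)
    thus "wdeg w = c" using c by (metis append_take_drop_id wdeg_append)
  qed
qed

lemma rels_homog: "r \<in> rels p q \<theta> \<Longrightarrow> \<exists>d. homog d r"
  unfolding rels_def Let_def
  by (auto intro!: homog_diff homog_smult homog_one homog_mult[OF homog_gen homog_gen] 
     homog_mult[OF homog_diff[OF homog_one homog_mult[OF homog_gen homog_gen]] homog_diff[OF homog_one homog_mult[OF homog_gen homog_gen]]])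

lemma mult_smult_l: "fa_mult (fa_smult c f) g = fa_smult c (fa_mult f g)"
  by (simp add: fa_mult_def fa_smult_def sum_distrib_left mult_ac fun_eq_iff)
lemma mult_smult_r: "fa_mult f (fa_smult c g) = fa_smult c (fa_mult f g)"
  by (simp add: fa_mult_def fa_smult_def sum_distrib_left mult_ac fun_eq_iff)

lemma gm_ideal:
  assumes R: "\<And>r. r \<in> R \<Longrightarrow> \<exists>d. homog d r"
  shows "f \<in> star_ideal R \<Longrightarrow> gm N t f \<in> star_ideal R"
proof (induction rule: star_ideal.induct)
  case zero thus ?case by (simp add: gm_zero star_ideal.zero)
next
  case (gen r x y)
  then obtain d where d: "homog d r" using R by blast
  have "gm N t (fa_mult (fa_mult x r) y) = fa_smult (gz N (int t * d)) (fa_mult (fa_mult (gm N t x) r) (gm N t y))"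
    by (simp add: gm_mult gm_homog[OF d] mult_smult_l mult_smult_r)
  thus ?case using gen by (simp add: star_ideal.smult star_ideal.gen fin_gm)
next
  case (add f g) thus ?case by (simp add: gm_add star_ideal.add)
next
  case (smult f c) thus ?case by (simp add: gm_smult star_ideal.smult)
next
  case (star f) thus ?case by (simp add: gm_star star_ideal.star)
qed

lemma ideal_sum: "finite S \<Longrightarrow> (\<And>t. t \<in> S \<Longrightarrow> g t \<in> star_ideal R) \<Longrightarrow> (\<lambda>w. \<Sum>t\<in>S. g t w) \<in> star_ideal R"
proof (induction S rule: finite_induct)
  case empty
  have "(\<lambda>w. \<Sum>t\<in>{}. g t w) = fa_zero" by (simp add: fa_zero_def)
  thus ?case by (simp add: star_ideal.zero)
next
  case (insert a S)
  have "(\<lambda>w. \<Sum>t\<in>insert a S. g t w) = fa_add (g a) (\<lambda>w. \<Sum>t\<in>S. g t w)"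
    using insert by (simp add: fa_add_def)
  thus ?case using insert by (simp add: star_ideal.add)
qed

lemma coact_sum:
  assumes N: "0 < N" and k: "k < N"
  shows "coact N f k = (\<lambda>w. \<Sum>t<N. fa_smult (gz N (- (int t * int k)) / of_nat N) (gm N t f) w)"
proof (rule ext)
  fix w
  have "(\<Sum>t<N. fa_smult (gz N (- (int t * int k)) / of_nat N) (gm N t f) w)
        = f w / of_nat N * (\<Sum>t<N. gz N (int t * (wdeg w - int k)))"
    by (simp add: fa_smult_def gm_def sum_distrib_left sum_distrib_right right_diff_distrib gz_add[symmetric] mult_ac)
  also have "\<dots> = (if int N dvd (wdeg w - int k) then f w else 0)"
    using N by (simp add: rootsum)
  also have "\<dots> = coact N f k w"
  proof -
    have "int N dvd (wdeg w - int k) \<longleftrightarrow> wdeg w mod int N = int k"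
      using k by (metis mod_eq_dvd_iff mod_pos_pos_trivial of_nat_0_le_iff of_nat_less_iff)
    thus ?thesis by (simp add: coact_def)
  qed
  finally show "coact N f k w = (\<Sum>t<N. fa_smult (gz N (- (int t * int k)) / of_nat N) (gm N t f) w)" ..
qed

theorem descends: "0 < N \<Longrightarrow> coaction_descends N (S3_ideal p q \<theta>)"
  unfolding coaction_descends_def
proof (intro ballI allI impI)
  fix f k assume N: "0 < N" and f: "f \<in> S3_ideal p q \<theta>" and k: "k < N"
  show "coact N f k \<in> S3_ideal p q \<theta>"
    unfolding coact_sum[OF N k] S3_ideal_def
    by (rule ideal_sum) (use f rels_homog in \<open>auto simp: S3_ideal_def intro!: star_ideal.smult gm_ideal\<close>)
qed

lemma model_approx:
  fixes Wd :: "gen list \<Rightarrow> nat \<Rightarrow> nat \<Rightarrow> complex" and \<pi> :: "int \<times> int \<Rightarrow> int"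
    and \<psi> :: "int \<times> int \<Rightarrow> nat \<Rightarrow> complex" and r :: real
  assumes fin: "finite (supp f)"
    and wa: "\<And>w i. length w \<le> j \<Longrightarrow> cmod (Wd w j i - (if int i = int j + \<pi> (bd w) then cw \<theta> w * \<psi> (bd w) j else 0))
              \<le> real (length w) * r ^ (j - length w)"
    and L: "\<And>w. w \<in> supp f \<Longrightarrow> length w \<le> L" and Lj: "L \<le> j" and r: "0 \<le> r" "r \<le> 1"
    and mono: "\<And>b. b \<noteq> m \<Longrightarrow> coef \<theta> f b = 0"
  shows "cmod ((\<Sum>w\<in>supp f. f w * Wd w j i) - (if int i = int j + \<pi> m then coef \<theta> f m * \<psi> m j else 0))
         \<le> (real L * (\<Sum>w\<in>supp f. cmod (f w))) * r ^ (j - L)"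
proof -
  define \<Phi> where "\<Phi> b = (if int i = int j + \<pi> b then \<psi> b j else 0)" for b
  have "(\<Sum>w\<in>supp f. f w * (if int i = int j + \<pi> (bd w) then cw \<theta> w * \<psi> (bd w) j else 0))
        = (\<Sum>w\<in>supp f. f w * cw \<theta> w * \<Phi> (bd w))"
    by (intro sum.cong refl) (simp add: \<Phi>_def)
  also have "\<dots> = (\<Sum>b\<in>bd ` supp f. coef \<theta> f b * \<Phi> b)" by (rule group_sum[OF fin])
  also have "\<dots> = coef \<theta> f m * \<Phi> m"
  proof (cases "m \<in> bd ` supp f")
    case True thus ?thesis using fin mono by (intro sum_single) auto
  next
    case False
    hence "coef \<theta> f m = 0" by (rule coef_out)
    hence z: "\<And>b. coef \<theta> f b = 0" using mono by metis
    show ?thesis by (simp only: z mult_zero_left sum.neutral_const)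
  qed
  finally have meq: "(\<Sum>w\<in>supp f. f w * (if int i = int j + \<pi> (bd w) then cw \<theta> w * \<psi> (bd w) j else 0))
        = (if int i = int j + \<pi> m then coef \<theta> f m * \<psi> m j else 0)" by (simp add: \<Phi>_def)
  have "(\<Sum>w\<in>supp f. f w * Wd w j i) - (if int i = int j + \<pi> m then coef \<theta> f m * \<psi> m j else 0)
        = (\<Sum>w\<in>supp f. f w * (Wd w j i - (if int i = int j + \<pi> (bd w) then cw \<theta> w * \<psi> (bd w) j else 0)))"
    unfolding meq[symmetric] by (simp add: sum_subtractf right_diff_distrib)
  also have "cmod \<dots> \<le> (\<Sum>w\<in>supp f. cmod (f w) * (real L * r ^ (j - L)))"
  proof -
    have "cmod (f w * (Wd w j i - (if int i = int j + \<pi> (bd w) then cw \<theta> w * \<psi> (bd w) j else 0)))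
          \<le> cmod (f w) * (real L * r ^ (j - L))" if w: "w \<in> supp f" for w
    proof -
      have lw: "length w \<le> L" "length w \<le> j" using L[OF w] Lj by auto
      have "r ^ (j - length w) \<le> r ^ (j - L)" using r lw by (intro power_decreasing) auto
      hence "real (length w) * r ^ (j - length w) \<le> real L * r ^ (j - L)"
        using lw r by (intro mult_mono) auto
      hence "cmod (Wd w j i - (if int i = int j + \<pi> (bd w) then cw \<theta> w * \<psi> (bd w) j else 0)) \<le> real L * r ^ (j - L)"
        using wa[of w i, OF lw(2)] by linarith
      thus ?thesis unfolding norm_mult by (intro mult_left_mono) auto
    qed
    thus ?thesis by (intro order_trans[OF norm_sum] sum_mono) auto
  qed
  also have "\<dots> = (real L * (\<Sum>w\<in>supp f. cmod (f w))) * r ^ (j - L)"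
    by (simp add: sum_distrib_right sum_distrib_left mult_ac)
  finally show ?thesis .
qed

lemma band_generic:
  fixes Wd :: "gen list \<Rightarrow> nat \<Rightarrow> nat \<Rightarrow> complex"
  assumes sp: "\<And>w i j. Wd w j i \<noteq> 0 \<Longrightarrow> int i = int j + \<kappa> w"
    and kb: "\<And>w. \<bar>\<kappa> w\<bar> \<le> int (length w)"
    and L: "\<And>w. w \<in> supp f \<Longrightarrow> length w \<le> L"
    and ij: "L < i - j \<or> L < j - i"
  shows "(\<Sum>w\<in>supp f. f w * Wd w j i) = 0"
proof (intro sum.neutral ballI)
  fix w assume w: "w \<in> supp f"
  show "f w * Wd w j i = 0"
  proof (rule ccontr)
    assume "f w * Wd w j i \<noteq> 0"
    hence "int i = int j + \<kappa> w" using sp by auto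
    thus False using kb[of w] L[OF w] ij by auto
  qed
qed

lemma inv_generic:
  fixes R S :: "(nat \<Rightarrow> complex) \<Rightarrow> (nat \<Rightarrow> complex)"
  assumes lin: "\<And>(c :: nat \<Rightarrow> complex) (v :: nat \<Rightarrow> nat \<Rightarrow> complex) (A :: nat set). finite A \<Longrightarrow>
                 R (\<lambda>x. \<Sum>t\<in>A. c t * v t x) = (\<lambda>x. \<Sum>t\<in>A. c t * R (v t) x)"
    and comp: "\<And>v. R (S v) = v"
    and band: "\<And>x j. L < x - j \<or> L < j - x \<Longrightarrow> S (dl j) x = 0"
    and n: "i + L < n"
  shows "(\<Sum>j<n. R (dl j) i * S (dl i) j) = 1"
proof -
  have "S (dl i) = (\<lambda>x. \<Sum>j<n. S (dl i) j * dl j x)"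
  proof (rule ext)
    fix x
    have "(\<Sum>j<n. S (dl i) j * dl j x) = (if x < n then S (dl i) x else 0)"
      by (simp add: dl_def if_distrib sum.delta cong: if_cong)
    also have "\<dots> = S (dl i) x" using band[of x i] n by auto
    finally show "S (dl i) x = (\<Sum>j<n. S (dl i) j * dl j x)" ..
  qed
  hence "R (S (dl i)) = (\<lambda>x. \<Sum>j<n. S (dl i) j * R (dl j) x)"
    using lin[of "lessThan n" "\<lambda>j. S (dl i) j" dl] by simp
  hence "(\<Sum>j<n. S (dl i) j * R (dl j) i) = dl i i" using comp by metis
  thus ?thesis by (simp add: dl_def mult.commute)
qed

lemma fin_coact: "fin f \<Longrightarrow> fin (coact N f k)"
proof -
  assume "fin f"
  have "{w. coact N f k w \<noteq> 0} \<subseteq> {w. f w \<noteq> 0}" by (auto simp: coact_def)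
  thus ?thesis using \<open>fin f\<close> unfolding fin_def using finite_subset by blast
qed

lemma rep1_entry: "rho1.rep p \<theta> f v x = (\<Sum>w\<in>supp f. f w * rho1.wop p \<theta> w v x)"
  by (simp add: rho1.rep_def)
lemma rep2_entry: "rho2.rep q \<theta> f v x = (\<Sum>w\<in>supp f. f w * rho2.wop q \<theta> w v x)"
  by (simp add: rho2.rep_def)

theorem noncleft:
  fixes p q \<theta> :: real and N :: nat
  assumes p: "0 \<le> p" "p < 1" and q: "0 \<le> q" "q < 1" and N: "2 \<le> N"
  shows "\<not> cleft N (S3_ideal p q \<theta>)"
proof
  let ?I = "S3_ideal p q \<theta>"
  assume "cleft N ?I"
  then obtain J G where Jfin: "\<forall>k<N. fin (J k)" and colin: "colinear N ?I J"
    and Gfin: "\<forall>k<N. fin (G k)"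
    and cv: "\<forall>h. qeq ?I (conv N J G h) (fa_smult (H_counit N h) fa_one) \<and>
                  qeq ?I (conv N G J h) (fa_smult (H_counit N h) fa_one)"
    unfolding cleft_def by blast
  have N1: "1 < N" using N by simp
  define J1 where "J1 = J 1"
  define G1 where "G1 = G 1"
  have fJ: "fin J1" and fG: "fin G1" using Jfin Gfin N1 by (auto simp: J1_def G1_def)
  define h1 where "h1 = (\<lambda>i::nat. if i = 1 then 1 else (0::complex))"
  have conv1: "conv N F1 F2 h1 = fa_mult (F1 1) (F2 1)" for F1 F2
  proof (rule ext)
    fix w
    have "(\<Sum>j<N. H_coprod h1 i j * fa_mult (F1 i) (F2 j) w) = h1 i * fa_mult (F1 i) (F2 i) w" if "i < N" for i
    proof -
      have "H_coprod h1 i j * fa_mult (F1 i) (F2 j) w = (if j = i then h1 i * fa_mult (F1 i) (F2 i) w else 0)" for j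
        by (simp add: H_coprod_def)
      thus ?thesis using that by (simp add: sum.delta)
    qed
    hence "conv N F1 F2 h1 w = (\<Sum>i<N. h1 i * fa_mult (F1 i) (F2 i) w)"
      unfolding conv_def by simp
    also have "\<dots> = (\<Sum>i<N. if i = 1 then fa_mult (F1 i) (F2 i) w else 0)"
      by (intro sum.cong refl) (simp add: h1_def)
    also have "\<dots> = fa_mult (F1 1) (F2 1) w" using N1 by (simp only: sum.delta finite_lessThan lessThan_iff if_True)
    finally show "conv N F1 F2 h1 w = fa_mult (F1 1) (F2 1) w" .
  qed
  have cnt: "fa_smult (H_counit N h1) fa_one = fa_one"
    using N1 by (simp add: H_counit_def h1_def fa_smult_def sum.delta')
  have c1: "qeq ?I (conv N J G h1) (fa_smult (H_counit N h1) fa_one)" using cv by blast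
  have c2: "qeq ?I (conv N G J h1) (fa_smult (H_counit N h1) fa_one)" using cv by blast
  have mJG: "fa_diff (fa_mult J1 G1) fa_one \<in> ?I"
    using c1 unfolding conv1 cnt qeq_def J1_def G1_def .
  have mGJ: "fa_diff (fa_mult G1 J1) fa_one \<in> ?I"
    using c2 unfolding conv1 cnt qeq_def J1_def G1_def .
  have le1: "lin_ext N J h1 = J1"
  proof (rule ext)
    fix w
    have "lin_ext N J h1 w = (\<Sum>i<N. if i = 1 then J i w else 0)"
      unfolding lin_ext_def by (intro sum.cong refl) (simp add: h1_def)
    also have "\<dots> = J1 w" using N1 by (simp only: sum.delta finite_lessThan lessThan_iff if_True) (simp add: J1_def)
    finally show "lin_ext N J h1 w = J1 w" .
  qed
  have re1: "(\<lambda>w. \<Sum>i<N. H_coprod h1 i 1 * J i w) = J1"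
  proof (rule ext)
    fix w
    have "(\<Sum>i<N. H_coprod h1 i 1 * J i w) = (\<Sum>i<N. if i = 1 then J i w else 0)"
      by (intro sum.cong refl) (simp add: h1_def H_coprod_def)
    also have "\<dots> = J1 w" using N1 by (simp only: sum.delta finite_lessThan lessThan_iff if_True) (simp add: J1_def)
    finally show "(\<Sum>i<N. H_coprod h1 i 1 * J i w) = J1 w" .
  qed
  have mCo: "fa_diff (coact N J1 1) J1 \<in> ?I"
    using colin N1 le1 re1 unfolding colinear_def qeq_def by metis
  have fC: "fin (coact N J1 1)" using fJ by (rule fin_coact)
  have sJG: "sig.rep \<theta> (fa_mult J1 G1) = sig.rep \<theta> fa_one"
    using sig_kills[OF mJG] fJ fG by (intro sig.rep_fin_zero) auto
  have sCo: "sig.rep \<theta> (coact N J1 1) = sig.rep \<theta> J1"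
    using sig_kills[OF mCo] fJ fC by (intro sig.rep_fin_zero) auto
  have comp0: "sig.rep \<theta> J1 (sig.rep \<theta> G1 d0) = d0"
  proof -
    have "sig.rep \<theta> (fa_mult J1 G1) d0 = sig.rep \<theta> fa_one d0" using sJG by simp
    thus ?thesis by (simp only: sig.rep_mult[OF fJ fG] sig.rep_one)
  qed
  hence "sig.rep \<theta> J1 (coef \<theta> G1) = d0" using sig_rep_d0[OF fG] by simp
  hence eqs: "(\<Sum>b\<in>bd ` supp J1. coef \<theta> J1 b * (zp \<theta> (-(fst x - fst b) * snd b) * coef \<theta> G1 (fst x - fst b, snd x - snd b)))
            = (if x = (0,0) then 1 else 0)" for x
    using sig_rep[OF fJ, of \<theta> "coef \<theta> G1" x] by (simp add: d0_def)
  have fsJ: "finite (supp J1)" and fsG: "finite (supp G1)" using fJ fG by (simp_all add: fin_supp)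
  have "\<exists>m. m \<in> bd ` supp J1 \<and> (\<forall>b. b \<noteq> m \<longrightarrow> coef \<theta> J1 b = 0)
      \<and> (\<forall>b. b \<noteq> (- fst m, - snd m) \<longrightarrow> coef \<theta> G1 b = 0)
      \<and> coef \<theta> J1 m * (zp \<theta> (-(fst (0::int,0::int) - fst m) * snd m) * coef \<theta> G1 (- fst m, - snd m)) = 1"
  proof (rule unit_mono[where ph = "\<lambda>x b. zp \<theta> (-(fst x - fst b) * snd b)", OF _ _ _ _ _ eqs])
    show "finite (bd ` supp J1)" "finite (bd ` supp G1)" using fsJ fsG by auto
    show "\<And>b. b \<notin> bd ` supp J1 \<Longrightarrow> coef \<theta> J1 b = 0" by (rule coef_out)
    show "\<And>b. b \<notin> bd ` supp G1 \<Longrightarrow> coef \<theta> G1 b = 0" by (rule coef_out)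
    show "\<And>x b. zp \<theta> (-(fst x - fst b) * snd b) \<noteq> 0" by simp
  qed
  then obtain m where m: "m \<in> bd ` supp J1" and Fm: "\<forall>b. b \<noteq> m \<longrightarrow> coef \<theta> J1 b = 0"
    and Hm: "\<forall>b. b \<noteq> (- fst m, - snd m) \<longrightarrow> coef \<theta> G1 b = 0"
    and rel0: "coef \<theta> J1 m * (zp \<theta> (-(fst (0::int,0::int) - fst m) * snd m) * coef \<theta> G1 (- fst m, - snd m)) = 1"
    by blast
  define k where "k = fst m"
  define l where "l = snd m"
  define c where "c = coef \<theta> J1 m"
  define c' where "c' = coef \<theta> G1 (- k, - l)"
  have rel: "c * c' * zp \<theta> (k * l) = 1" using rel0 by (simp add: c_def c'_def k_def l_def mult_ac)
  have c0: "c \<noteq> 0" using rel by auto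
  have "coef \<theta> (coact N J1 1) = coef \<theta> J1"
    using sig_rep_d0[OF fC, of \<theta>] sig_rep_d0[OF fJ, of \<theta>] sCo by simp
  hence "coef \<theta> (coact N J1 1) m \<noteq> 0" using c0 by (simp add: c_def)
  hence "m \<in> bd ` supp (coact N J1 1)" using coef_out by blast
  then obtain w where w: "coact N J1 1 w \<noteq> 0" "bd w = m" by (auto simp: supp_def)
  hence deg: "(k + l) mod int N = 1"
    using wdeg_kd_ld[of w] by (auto simp: coact_def bd_def k_def l_def split: if_splits)
  define L where "L = (\<Sum>w\<in>supp J1 \<union> supp G1. length w)"
  have Lw: "length w \<le> L" if "w \<in> supp J1 \<union> supp G1" for w
    unfolding L_def using that fsJ fsG by (intro member_le_sum) auto
  have LJ: "\<And>w. w \<in> supp J1 \<Longrightarrow> length w \<le> L" and LG: "\<And>w. w \<in> supp G1 \<Longrightarrow> length w \<le> L"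
    using Lw by auto
  obtain w0 where w0: "w0 \<in> supp J1" "bd w0 = m" using m by auto
  have kL: "\<bar>k\<bar> \<le> int L" using kd_bound[of w0] LJ[OF w0(1)] w0(2) by (auto simp: k_def bd_def)
  have lL: "\<bar>l\<bar> \<le> int L" using ld_bound[of w0] LJ[OF w0(1)] w0(2) by (auto simp: l_def bd_def)
  define C where "C = real L * ((\<Sum>w\<in>supp J1. cmod (J1 w)) + (\<Sum>w\<in>supp G1. cmod (G1 w)))"
  have C0: "0 \<le> C" unfolding C_def by (intro mult_nonneg_nonneg add_nonneg_nonneg sum_nonneg) auto
  have CJ: "real L * (\<Sum>w\<in>supp J1. cmod (J1 w)) \<le> C" and CG: "real L * (\<Sum>w\<in>supp G1. cmod (G1 w)) \<le> C"
    unfolding C_def by (auto intro!: mult_left_mono sum_nonneg)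
  have FmJ: "\<And>b. b \<noteq> m \<Longrightarrow> coef \<theta> J1 b = 0" using Fm by blast
  have HmG: "\<And>b. b \<noteq> (- k, - l) \<Longrightarrow> coef \<theta> G1 b = 0" using Hm unfolding k_def l_def by blast
  have p1: "p \<le> 1" and q1: "q \<le> 1" using p q by auto
  have J1inv1: "rho1.rep p \<theta> J1 (rho1.rep p \<theta> G1 v) = v" for v
  proof -
    have "rho1.rep p \<theta> (fa_mult J1 G1) = rho1.rep p \<theta> fa_one"
      using rho1_kills[OF mJG] fJ fG by (intro rho1.rep_fin_zero) auto
    hence "rho1.rep p \<theta> (fa_mult J1 G1) v = rho1.rep p \<theta> fa_one v" by simp
    thus ?thesis by (simp only: rho1.rep_mult[OF fJ fG] rho1.rep_one)
  qed
  have G1inv1: "rho1.rep p \<theta> G1 (rho1.rep p \<theta> J1 v) = v" for v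
  proof -
    have "rho1.rep p \<theta> (fa_mult G1 J1) = rho1.rep p \<theta> fa_one"
      using rho1_kills[OF mGJ] fJ fG by (intro rho1.rep_fin_zero) auto
    hence "rho1.rep p \<theta> (fa_mult G1 J1) v = rho1.rep p \<theta> fa_one v" by simp
    thus ?thesis by (simp only: rho1.rep_mult[OF fG fJ] rho1.rep_one)
  qed
  have bandJ1: "rho1.rep p \<theta> J1 (dl j) i = 0" if "L < i - j \<or> L < j - i" for i j
    unfolding rep1_entry
    by (rule band_generic[where Wd="\<lambda>w j i. rho1.wop p \<theta> w (dl j) i" and \<kappa>=kd, OF rho1_supp kd_bound LJ that])
  have bandG1: "rho1.rep p \<theta> G1 (dl j) i = 0" if "L < i - j \<or> L < j - i" for i j
    unfolding rep1_entry
    by (rule band_generic[where Wd="\<lambda>w j i. rho1.wop p \<theta> w (dl j) i" and \<kappa>=kd, OF rho1_supp kd_bound LG that])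
  have wa1: "\<And>w i. length w \<le> j \<Longrightarrow> cmod (rho1.wop p \<theta> w (dl j) i - (if int i = int j + fst (bd w) then cw \<theta> w * zp \<theta> (- int j * snd (bd w)) else 0)) \<le> real (length w) * p ^ (j - length w)" for j
    unfolding bd_def fst_conv snd_conv by (rule rho1_approx[OF p(1) p1])
  have aT1: "cmod (rho1.rep p \<theta> J1 (dl j) i - (if int i = int j + k then c * zp \<theta> (- int j * l) else 0)) \<le> C * p ^ (j - L)"
    if j: "L \<le> j" for i j
  proof -
    have "cmod ((\<Sum>w\<in>supp J1. J1 w * rho1.wop p \<theta> w (dl j) i) - (if int i = int j + fst m then coef \<theta> J1 m * zp \<theta> (- int j * snd m) else 0))
          \<le> (real L * (\<Sum>w\<in>supp J1. cmod (J1 w))) * p ^ (j - L)"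
      by (rule model_approx[where Wd="\<lambda>w j i. rho1.wop p \<theta> w (dl j) i" and \<pi>=fst and \<psi>="\<lambda>b j. zp \<theta> (- int j * snd b)"
            and m=m, OF fsJ wa1 LJ j p(1) p1 FmJ])
    also have "\<dots> \<le> C * p ^ (j - L)" using CJ p by (intro mult_right_mono) auto
    finally show ?thesis unfolding rep1_entry k_def l_def c_def .
  qed
  have aG1: "cmod (rho1.rep p \<theta> G1 (dl j) i - (if int i = int j - k then c' * zp \<theta> (int j * l) else 0)) \<le> C * p ^ (j - L)"
    if j: "L \<le> j" for i j
  proof -
    have "cmod ((\<Sum>w\<in>supp G1. G1 w * rho1.wop p \<theta> w (dl j) i) - (if int i = int j + fst (-k,-l) then coef \<theta> G1 (-k,-l) * zp \<theta> (- int j * snd (-k,-l)) else 0))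
          \<le> (real L * (\<Sum>w\<in>supp G1. cmod (G1 w))) * p ^ (j - L)"
      by (rule model_approx[where Wd="\<lambda>w j i. rho1.wop p \<theta> w (dl j) i" and \<pi>=fst and \<psi>="\<lambda>b j. zp \<theta> (- int j * snd b)"
            and m="(-k,-l)", OF fsG wa1 LG j p(1) p1 HmG])
    also have "\<dots> \<le> C * p ^ (j - L)" using CG p by (intro mult_right_mono) auto
    moreover have "(if int i = int j + fst (-k,-l) then coef \<theta> G1 (-k,-l) * zp \<theta> (- int j * snd (-k,-l)) else 0)
       = (if int i = int j - k then c' * zp \<theta> (int j * l) else 0)" by (simp add: c'_def)
    ultimately show ?thesis unfolding rep1_entry by simp
  qed
  have ab1: "c * zp \<theta> (- int j * l) * (c' * zp \<theta> (int i * l)) = 1" if "int i = int j + k" for i j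
  proof -
    have "- int j * l + int i * l = k * l" using that by (simp add: algebra_simps)
    hence "zp \<theta> (- int j * l) * zp \<theta> (int i * l) = zp \<theta> (k * l)" by (simp add: zp_mult)
    thus ?thesis using rel by (simp add: mult_ac)
  qed
  have k0: "k = 0"
  proof (rule index_zero[where T="\<lambda>i j. rho1.rep p \<theta> J1 (dl j) i" and Gm="\<lambda>i j. rho1.rep p \<theta> G1 (dl j) i"
        and L=L and Lb=L and C=C and B="cmod c + cmod c'" and r=p
        and \<alpha>="\<lambda>j. c * zp \<theta> (- int j * l)" and \<beta>="\<lambda>j. c' * zp \<theta> (int j * l)"])
    show "\<And>i j. L < i - j \<or> L < j - i \<Longrightarrow> rho1.rep p \<theta> J1 (dl j) i = 0 \<and> rho1.rep p \<theta> G1 (dl j) i = 0"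
      using bandJ1 bandG1 by blast
    show "\<And>i n. i + L < n \<Longrightarrow> (\<Sum>j<n. rho1.rep p \<theta> J1 (dl j) i * rho1.rep p \<theta> G1 (dl i) j) = 1"
      by (rule inv_generic[where R="rho1.rep p \<theta> J1" and S="rho1.rep p \<theta> G1"])
         (use rho1.rep_sum J1inv1 bandG1 in auto)
    show "\<And>i n. i + L < n \<Longrightarrow> (\<Sum>j<n. rho1.rep p \<theta> G1 (dl j) i * rho1.rep p \<theta> J1 (dl i) j) = 1"
      by (rule inv_generic[where R="rho1.rep p \<theta> G1" and S="rho1.rep p \<theta> J1"])
         (use rho1.rep_sum G1inv1 bandJ1 in auto)
    show "\<bar>k\<bar> \<le> int L" by (rule kL)
    show "\<And>i j. int i = int j + k \<Longrightarrow> c * zp \<theta> (- int j * l) * (c' * zp \<theta> (int i * l)) = 1" by (rule ab1)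
    show "\<And>i j. L \<le> j \<Longrightarrow> cmod (rho1.rep p \<theta> J1 (dl j) i - (if int i = int j + k then c * zp \<theta> (- int j * l) else 0)) \<le> C * p ^ (j - L)"
      by (rule aT1)
    show "\<And>i j. L \<le> j \<Longrightarrow> cmod (rho1.rep p \<theta> G1 (dl j) i - (if int i = int j - k then c' * zp \<theta> (int j * l) else 0)) \<le> C * p ^ (j - L)"
      by (rule aG1)
    show "\<And>j. cmod (c * zp \<theta> (- int j * l)) \<le> cmod c + cmod c'" by (simp add: norm_mult)
    show "\<And>j. cmod (c' * zp \<theta> (int j * l)) \<le> cmod c + cmod c'" by (simp add: norm_mult)
  qed (use p C0 in auto)
  have J1inv2: "rho2.rep q \<theta> J1 (rho2.rep q \<theta> G1 v) = v" for v
  proof -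
    have "rho2.rep q \<theta> (fa_mult J1 G1) = rho2.rep q \<theta> fa_one"
      using rho2_kills[OF mJG] fJ fG by (intro rho2.rep_fin_zero) auto
    hence "rho2.rep q \<theta> (fa_mult J1 G1) v = rho2.rep q \<theta> fa_one v" by simp
    thus ?thesis by (simp only: rho2.rep_mult[OF fJ fG] rho2.rep_one)
  qed
  have G1inv2: "rho2.rep q \<theta> G1 (rho2.rep q \<theta> J1 v) = v" for v
  proof -
    have "rho2.rep q \<theta> (fa_mult G1 J1) = rho2.rep q \<theta> fa_one"
      using rho2_kills[OF mGJ] fJ fG by (intro rho2.rep_fin_zero) auto
    hence "rho2.rep q \<theta> (fa_mult G1 J1) v = rho2.rep q \<theta> fa_one v" by simp
    thus ?thesis by (simp only: rho2.rep_mult[OF fG fJ] rho2.rep_one)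
  qed
  have bandJ2: "rho2.rep q \<theta> J1 (dl j) i = 0" if "L < i - j \<or> L < j - i" for i j
    unfolding rep2_entry
    by (rule band_generic[where Wd="\<lambda>w j i. rho2.wop q \<theta> w (dl j) i" and \<kappa>=ld, OF rho2_supp ld_bound LJ that])
  have bandG2: "rho2.rep q \<theta> G1 (dl j) i = 0" if "L < i - j \<or> L < j - i" for i j
    unfolding rep2_entry
    by (rule band_generic[where Wd="\<lambda>w j i. rho2.wop q \<theta> w (dl j) i" and \<kappa>=ld, OF rho2_supp ld_bound LG that])
  have wa2: "\<And>w i. length w \<le> j \<Longrightarrow> cmod (rho2.wop q \<theta> w (dl j) i - (if int i = int j + snd (bd w) then cw \<theta> w * zp \<theta> (fst (bd w) * (int j + snd (bd w))) else 0)) \<le> real (length w) * q ^ (j - length w)" for j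
    unfolding bd_def fst_conv snd_conv by (rule rho2_approx[OF q(1) q1])
  have aT2: "cmod (rho2.rep q \<theta> J1 (dl j) i - (if int i = int j + l then c * zp \<theta> (k * (int j + l)) else 0)) \<le> C * q ^ (j - L)"
    if j: "L \<le> j" for i j
  proof -
    have "cmod ((\<Sum>w\<in>supp J1. J1 w * rho2.wop q \<theta> w (dl j) i) - (if int i = int j + snd m then coef \<theta> J1 m * zp \<theta> (fst m * (int j + snd m)) else 0))
          \<le> (real L * (\<Sum>w\<in>supp J1. cmod (J1 w))) * q ^ (j - L)"
      by (rule model_approx[where Wd="\<lambda>w j i. rho2.wop q \<theta> w (dl j) i" and \<pi>=snd and \<psi>="\<lambda>b j. zp \<theta> (fst b * (int j + snd b))"
            and m=m, OF fsJ wa2 LJ j q(1) q1 FmJ])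
    also have "\<dots> \<le> C * q ^ (j - L)" using CJ q by (intro mult_right_mono) auto
    finally show ?thesis unfolding rep2_entry k_def l_def c_def .
  qed
  have aG2: "cmod (rho2.rep q \<theta> G1 (dl j) i - (if int i = int j - l then c' * zp \<theta> (- k * (int j - l)) else 0)) \<le> C * q ^ (j - L)"
    if j: "L \<le> j" for i j
  proof -
    have "cmod ((\<Sum>w\<in>supp G1. G1 w * rho2.wop q \<theta> w (dl j) i) - (if int i = int j + snd (-k,-l) then coef \<theta> G1 (-k,-l) * zp \<theta> (fst (-k,-l) * (int j + snd (-k,-l))) else 0))
          \<le> (real L * (\<Sum>w\<in>supp G1. cmod (G1 w))) * q ^ (j - L)"
      by (rule model_approx[where Wd="\<lambda>w j i. rho2.wop q \<theta> w (dl j) i" and \<pi>=snd and \<psi>="\<lambda>b j. zp \<theta> (fst b * (int j + snd b))"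
            and m="(-k,-l)", OF fsG wa2 LG j q(1) q1 HmG])
    also have "\<dots> \<le> C * q ^ (j - L)" using CG q by (intro mult_right_mono) auto
    moreover have "(if int i = int j + snd (-k,-l) then coef \<theta> G1 (-k,-l) * zp \<theta> (fst (-k,-l) * (int j + snd (-k,-l))) else 0)
       = (if int i = int j - l then c' * zp \<theta> (- k * (int j - l)) else 0)" by (simp add: c'_def)
    ultimately show ?thesis unfolding rep2_entry by simp
  qed
  have ab2: "c * zp \<theta> (k * (int j + l)) * (c' * zp \<theta> (- k * (int i - l))) = 1" if "int i = int j + l" for i j
  proof -
    have "k * (int j + l) + - k * (int i - l) = k * l" using that by (simp add: algebra_simps)
    hence "zp \<theta> (k * (int j + l)) * zp \<theta> (- k * (int i - l)) = zp \<theta> (k * l)" by (simp add: zp_mult)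
    thus ?thesis using rel by (simp add: mult_ac)
  qed
  have l0: "l = 0"
  proof (rule index_zero[where T="\<lambda>i j. rho2.rep q \<theta> J1 (dl j) i" and Gm="\<lambda>i j. rho2.rep q \<theta> G1 (dl j) i"
        and L=L and Lb=L and C=C and B="cmod c + cmod c'" and r=q
        and \<alpha>="\<lambda>j. c * zp \<theta> (k * (int j + l))" and \<beta>="\<lambda>j. c' * zp \<theta> (- k * (int j - l))"])
    show "\<And>i j. L < i - j \<or> L < j - i \<Longrightarrow> rho2.rep q \<theta> J1 (dl j) i = 0 \<and> rho2.rep q \<theta> G1 (dl j) i = 0"
      using bandJ2 bandG2 by blast
    show "\<And>i n. i + L < n \<Longrightarrow> (\<Sum>j<n. rho2.rep q \<theta> J1 (dl j) i * rho2.rep q \<theta> G1 (dl i) j) = 1"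
      by (rule inv_generic[where R="rho2.rep q \<theta> J1" and S="rho2.rep q \<theta> G1"])
         (use rho2.rep_sum J1inv2 bandG2 in auto)
    show "\<And>i n. i + L < n \<Longrightarrow> (\<Sum>j<n. rho2.rep q \<theta> G1 (dl j) i * rho2.rep q \<theta> J1 (dl i) j) = 1"
      by (rule inv_generic[where R="rho2.rep q \<theta> G1" and S="rho2.rep q \<theta> J1"])
         (use rho2.rep_sum G1inv2 bandJ2 in auto)
    show "\<bar>l\<bar> \<le> int L" by (rule lL)
    show "\<And>i j. int i = int j + l \<Longrightarrow> c * zp \<theta> (k * (int j + l)) * (c' * zp \<theta> (- k * (int i - l))) = 1" by (rule ab2)
    show "\<And>i j. L \<le> j \<Longrightarrow> cmod (rho2.rep q \<theta> J1 (dl j) i - (if int i = int j + l then c * zp \<theta> (k * (int j + l)) else 0)) \<le> C * q ^ (j - L)"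
      by (rule aT2)
    show "\<And>i j. L \<le> j \<Longrightarrow> cmod (rho2.rep q \<theta> G1 (dl j) i - (if int i = int j - l then c' * zp \<theta> (- k * (int j - l)) else 0)) \<le> C * q ^ (j - L)"
      by (rule aG2)
    show "\<And>j. cmod (c * zp \<theta> (k * (int j + l))) \<le> cmod c + cmod c'" by (simp add: norm_mult)
    show "\<And>j. cmod (c' * zp \<theta> (- k * (int j - l))) \<le> cmod c + cmod c'" by (simp add: norm_mult)
  qed (use q C0 in auto)
  show False using deg k0 l0 N by simp
qed

theorem mainTheorem8:
  fixes p q \<theta> :: real and N :: nat
  assumes "0 \<le> p" "p < 1" "0 \<le> q" "q < 1"
    and "0 < \<theta>" "\<theta> < 1" "\<theta> \<notin> \<rat>"
    and "2 \<le> N"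
  shows "coaction_descends N (S3_ideal p q \<theta>) \<and> \<not> cleft N (S3_ideal p q \<theta>)"
proof
  show "coaction_descends N (S3_ideal p q \<theta>)" using assms(8) by (intro descends) simp
  show "\<not> cleft N (S3_ideal p q \<theta>)" using assms(1-4,8) by (rule noncleft)
qed

end
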